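(* For every $n\ge2$, \[ \mathrm{FC}(B_n)=\biguplus_{\pi\in \mathrm{FC}(S_n)} B_n(\pi)\cdot\pi , \] a disjoint union, where $B_n(\pi)\cdot\pi=\{\mu\pi\mid \mu\in B_n(\pi)\}$ and \[ B_n(\pi):=\begin{cases}\{\mu_1\mu_2\cdots\mu_{v(\pi)} \mid \mu_i\in\{e,\delta_i\}\ \text{for each } i\} & \text{if } 1\notin \mathrm{Des}(\pi^{-1}),\\ \{e,\delta_1,\delta_2,\ldots,\delta_{v(\pi)}\} & \text{if } 1\in\mathrm{Des}(\pi^{-1}).\end{cases} \]
   Context: $B_n$ is the group of signed permutations of $\{\pm1,\ldots,\pm n\}$, composed as functions ($(uv)(i)=u(v(i))$), with Coxeter generators $s_0=[-1,2,\ldots,n]$ and $s_i=[1,\ldots,i-1,i+1,i,i+2,\ldots,n]$ ($1\le i\le n-1$); $e$ is the identity. An element is fully commutative (FC) if any reduced expression can be obtained from any other using only commutation relations between commuting generators. $\mathrm{FC}(B_n)$ is the set of FC elements of $B_n$; $\mathrm{FC}(S_n)=\mathrm{FC}(B_n)\cap S_n$ (the $321$-avoiding permutations of $[n]$). For $\sigma\in S_n$, $\mathrm{Des}(\sigma)=\{1\le i\le n-1\mid \sigma_i>\sigma_{i+1}\}$. For $1\le i\le n$, $\delta_i:=s_{i-1}s_{i-2}\cdots s_1s_0$ (so $\delta_1=s_0$). The first valley of $\pi\in\mathrm{FC}(S_n)$ is $v(\pi):=\min(\mathrm{Des}(\pi^{-1})\setminus\{1\})$ if $\mathrm{Des}(\pi^{-1})\setminus\{1\}\neq\emptyset$,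 and $v(\pi):=n$ otherwise. *)

theory Defs
  imports Main
begin

text \<open>Signed permutations of {+-1,...,+-n} are represented as functions int => int
  that are bijective, odd (w(-i) = -w(i)), and the identity outside {+-1,...,+-n}.
  Product: (u v)(i) = u(v(i)), i.e. u v = u o v.\<close>

definition signed_perms :: "nat \<Rightarrow> (int \<Rightarrow> int) set" where
  "signed_perms n = {w. bij w \<and> (\<forall>i. w (- i) = - w i) \<and>
      (\<forall>i. \<not> (0 < \<bar>i\<bar> \<and> \<bar>i\<bar> \<le> int n) \<longrightarrow> w i = i)}"

definition gen :: "nat \<Rightarrow> int \<Rightarrow> int" where
  "gen k = (if k = 0 then (\<lambda>i. if i = 1 then -1 else if i = -1 then 1 else i)
     else (\<lambda>i. if i = int k then int k + 1 else if i = int k + 1 then int k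
               else if i = - int k then - (int k + 1) else if i = - (int k + 1) then - int k
               else i))"

definition word_eval :: "nat list \<Rightarrow> int \<Rightarrow> int" where
  "word_eval ws = foldr (\<lambda>k f. gen k \<circ> f) ws id"

definition words :: "nat \<Rightarrow> nat list set" where
  "words n = {ws. set ws \<subseteq> {0..<n}}"

definition coxeter_length :: "nat \<Rightarrow> (int \<Rightarrow> int) \<Rightarrow> nat" where
  "coxeter_length n w = (LEAST k. \<exists>ws \<in> words n. length ws = k \<and> word_eval ws = w)"

definition reduced_word :: "nat \<Rightarrow> (int \<Rightarrow> int) \<Rightarrow> nat list \<Rightarrow> bool" where
  "reduced_word n w ws \<longleftrightarrow> ws \<in> words n \<and> word_eval ws = w \<and> length ws = coxeter_length n w"

definition comm_step :: "(nat list \<times> nat list) set" where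
  "comm_step = {(xs @ [a, b] @ ys, xs @ [b, a] @ ys) | xs a b ys. gen a \<circ> gen b = gen b \<circ> gen a}"

definition FC_B :: "nat \<Rightarrow> (int \<Rightarrow> int) set" where
  "FC_B n = {w \<in> signed_perms n. \<forall>u v. reduced_word n w u \<and> reduced_word n w v \<longrightarrow> (u, v) \<in> comm_step\<^sup>*}"

definition FC_S :: "nat \<Rightarrow> (int \<Rightarrow> int) set" where
  "FC_S n = {w \<in> FC_B n. \<forall>i. 1 \<le> i \<and> i \<le> int n \<longrightarrow> w i > 0}"

definition Des_inv :: "nat \<Rightarrow> (int \<Rightarrow> int) \<Rightarrow> int set" where
  "Des_inv n \<pi> = {i. 1 \<le> i \<and> i \<le> int n - 1 \<and> inv \<pi> i > inv \<pi> (i + 1)}"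

definition first_valley :: "nat \<Rightarrow> (int \<Rightarrow> int) \<Rightarrow> nat" where
  "first_valley n \<pi> = (if Des_inv n \<pi> - {1} \<noteq> {} then nat (Min (Des_inv n \<pi> - {1})) else n)"

definition delta :: "nat \<Rightarrow> int \<Rightarrow> int" where
  "delta i = word_eval (rev [0..<i])"

definition B_pi :: "nat \<Rightarrow> (int \<Rightarrow> int) \<Rightarrow> (int \<Rightarrow> int) set" where
  "B_pi n \<pi> = (let v = first_valley n \<pi> in
     if 1 \<notin> Des_inv n \<pi>
     then {foldr (\<lambda>i f. (if i \<in> S then delta i else id) \<circ> f) [1..<v+1] id | S. S \<subseteq> {1..v}}
     else insert id (delta ` {1..v}))"

end

theory Submission
  imports Defs
begin

abbreviation sp where "sp n \<equiv> signed_perms n"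

lemma spD:
  assumes "w \<in> sp n"
  shows "bij w" "w (- i) = - w i" "\<not> (0 < \<bar>i\<bar> \<and> \<bar>i\<bar> \<le> int n) \<Longrightarrow> w i = i"
  using assms unfolding signed_perms_def by auto

lemma sp_zero: "w \<in> sp n \<Longrightarrow> w 0 = 0"
  using spD(2)[of w n 0] by simp

lemma sp_inj: "w \<in> sp n \<Longrightarrow> w x = w y \<longleftrightarrow> x = y"
  using spD(1) bij_is_inj inj_eq by metis

lemma sp_range:
  assumes "w \<in> sp n" "0 < \<bar>i\<bar>" "\<bar>i\<bar> \<le> int n"
  shows "0 < \<bar>w i\<bar> \<and> \<bar>w i\<bar> \<le> int n"
proof (rule ccontr)
  assume "\<not> ?thesis"
  then have "w (w i) = w i" using spD(3)[OF assms(1), of "w i"] by auto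
  then have "w i = i" using sp_inj[OF assms(1)] by simp
  then show False using \<open>\<not> (0 < \<bar>w i\<bar> \<and> \<bar>w i\<bar> \<le> int n)\<close> assms by auto
qed

lemma sp_comp: "u \<in> sp n \<Longrightarrow> v \<in> sp n \<Longrightarrow> u \<circ> v \<in> sp n"
  unfolding signed_perms_def by (auto intro: bij_comp)

lemma sp_id: "id \<in> sp n"
  unfolding signed_perms_def by auto

lemma sp_inv: assumes "w \<in> sp n" shows "inv w \<in> sp n"
proof -
  have b: "bij w" using spD(1)[OF assms] .
  have "inv w (- i) = - inv w i" for i
  proof -
    have "w (inv w i) = i" using b by (meson bij_inv_eq_iff)
    then have "w (- inv w i) = - i" using spD(2)[OF assms, of "inv w i"] by simp
    then show ?thesis using b by (metis bij_inv_eq_iff)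
  qed
  moreover have "\<not> (0 < \<bar>i\<bar> \<and> \<bar>i\<bar> \<le> int n) \<Longrightarrow> inv w i = i" for i
    using spD(3)[OF assms, of i] b by (metis bij_inv_eq_iff)
  ultimately show ?thesis using b unfolding signed_perms_def by (auto intro: bij_imp_bij_inv)
qed

lemma sp_inv_app: "w \<in> sp n \<Longrightarrow> w (inv w x) = x" "w \<in> sp n \<Longrightarrow> inv w (w x) = x"
  using spD(1) bij_inv_eq_iff by metis+

lemma sp_inv_comp: "w \<in> sp n \<Longrightarrow> w \<circ> inv w = id" "w \<in> sp n \<Longrightarrow> inv w \<circ> w = id"
  using sp_inv_app by auto

lemma sp_ext:
  assumes "u \<in> sp n" "v \<in> sp n" "\<And>i. 1 \<le> i \<Longrightarrow> i \<le> int n \<Longrightarrow> u i = v i"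
  shows "u = v"
proof
  fix i
  show "u i = v i"
  proof (cases "0 < \<bar>i\<bar> \<and> \<bar>i\<bar> \<le> int n")
    case True
    show ?thesis
    proof (cases "i > 0")
      case True then show ?thesis using assms(3) \<open>0 < \<bar>i\<bar> \<and> \<bar>i\<bar> \<le> int n\<close> by auto
    next
      case False
      then have "u (- i) = v (- i)" using assms(3)[of "-i"] True by auto
      then show ?thesis using spD(2)[OF assms(1), of "-i"] spD(2)[OF assms(2), of "-i"] by simp
    qed
  next
    case False then show ?thesis using spD(3)[OF assms(1)] spD(3)[OF assms(2)] by auto
  qed
qed

lemma gen0: "gen 0 x = (if x = 1 then -1 else if x = -1 then 1 else x)"
  by (simp add: gen_def)

lemma genk: "k \<ge> 1 \<Longrightarrow> gen k x = (if x = int k then int k + 1 else if x = int k + 1 then int k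
               else if x = - int k then - (int k + 1) else if x = - (int k + 1) then - int k
               else x)"
  by (simp add: gen_def)

lemma gen_invol: "gen a (gen a x) = x"
  by (cases "a = 0") (auto simp: gen0 genk)

lemma gen_invol': "gen a \<circ> gen a = id"
  using gen_invol by auto

lemma gen_bij: "bij (gen a)"
  by (metis bij_betw_imageI gen_invol inj_on_inverseI surj_def)

lemma gen_inv: "inv (gen a) = gen a"
  by (metis gen_invol' inv_unique_comp)

lemma gen_sp: "a < n \<Longrightarrow> gen a \<in> sp n"
  unfolding signed_perms_def using gen_bij
  by (cases "a = 0") (auto simp: gen0 genk)

lemma word_eval_Nil: "word_eval [] = id" by (simp add: word_eval_def)
lemma word_eval_Cons: "word_eval (a # ws) = gen a \<circ> word_eval ws" by (simp add: word_eval_def)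

lemma word_eval_sp: "ws \<in> words n \<Longrightarrow> word_eval ws \<in> sp n"
  by (induction ws) (auto simp: words_def word_eval_Nil word_eval_Cons sp_id intro: sp_comp gen_sp)

lemma gen_comm: "a + 2 \<le> b \<Longrightarrow> gen a \<circ> gen b = gen b \<circ> gen a"
  by (rule ext) (cases "a = 0"; auto simp: gen0 genk)

lemma gen_noncomm: "gen a \<circ> gen (a+1) \<noteq> gen (a+1) \<circ> gen a"
proof
  assume h: "gen a \<circ> gen (a+1) = gen (a+1) \<circ> gen a"
  show False
  proof (cases "a = 0")
    case True
    then show False using fun_cong[OF h, of 1] by (simp add: gen0 genk)
  next
    case False
    then show False using fun_cong[OF h, of "int a"] by (simp add: genk)
  qed
qed

lemma delta_Suc: "delta (Suc j) = gen j \<circ> delta j"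
  by (simp add: delta_def word_eval_def)

lemma delta_formula: "j \<ge> 1 \<Longrightarrow> delta j x = (if x = 1 then - int j else if 2 \<le> x \<and> x \<le> int j then x - 1
   else if x = -1 then int j else if - int j \<le> x \<and> x \<le> -2 then x + 1 else x)"
proof (induction j arbitrary: x)
  case 0 then show ?case by simp
next
  case (Suc j)
  show ?case
  proof (cases "j = 0")
    case True then show ?thesis by (simp add: delta_Suc delta_def word_eval_def gen0)
  next
    case False
    then have IH: "delta j y = (if y = 1 then - int j else if 2 \<le> y \<and> y \<le> int j then y - 1
      else if y = -1 then int j else if - int j \<le> y \<and> y \<le> -2 then y + 1 else y)" for y
      using Suc.IH by simp
    show ?thesis using False by (simp add: delta_Suc IH genk)
  qed
qed

lemma delta0: "delta 0 = id" by (simp add: delta_def word_eval_def)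


definition mu :: "nat \<Rightarrow> nat set \<Rightarrow> int \<Rightarrow> int" where
  "mu n N = foldr (\<lambda>i f. (if i \<in> N then delta i else id) \<circ> f) [1..<n+1] id"

definition negs :: "nat \<Rightarrow> (int \<Rightarrow> int) \<Rightarrow> nat set" where
  "negs n w = {j. 1 \<le> j \<and> j \<le> n \<and> (\<exists>x. 1 \<le> x \<and> x \<le> int n \<and> w x = - int j)}"

definition incr :: "nat \<Rightarrow> (int \<Rightarrow> int) \<Rightarrow> bool" where
  "incr n f \<longleftrightarrow> (\<forall>x y. 1 \<le> x \<longrightarrow> x < y \<longrightarrow> y \<le> int n \<longrightarrow> f x < f y)"

lemma negs_sub: "negs n w \<subseteq> {1..n}"
  unfolding negs_def by auto

lemma vals_char:
  assumes "w \<in> sp n"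
  shows "y \<in> w ` {1..int n} \<longleftrightarrow> 0 < \<bar>y\<bar> \<and> \<bar>y\<bar> \<le> int n \<and> (y < 0 \<longleftrightarrow> nat \<bar>y\<bar> \<in> negs n w)"
proof
  assume "y \<in> w ` {1..int n}"
  then obtain x where x: "1 \<le> x" "x \<le> int n" "w x = y" by auto
  have r: "0 < \<bar>y\<bar> \<and> \<bar>y\<bar> \<le> int n" using sp_range[OF assms, of x] x by auto
  have "y < 0 \<longleftrightarrow> nat \<bar>y\<bar> \<in> negs n w"
  proof
    assume "y < 0" then show "nat \<bar>y\<bar> \<in> negs n w" unfolding negs_def using x r by auto
  next
    assume "nat \<bar>y\<bar> \<in> negs n w"
    then obtain x' where x': "1 \<le> x'" "x' \<le> int n" "w x' = - \<bar>y\<bar>" unfolding negs_def using r by auto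
    show "y < 0"
    proof (rule ccontr)
      assume "\<not> y < 0"
      then have "w x' = w (- x)" using x' x spD(2)[OF assms, of x] by auto
      then have "x' = - x" using sp_inj[OF assms] by simp
      then show False using x x' by simp
    qed
  qed
  then show "0 < \<bar>y\<bar> \<and> \<bar>y\<bar> \<le> int n \<and> (y < 0 \<longleftrightarrow> nat \<bar>y\<bar> \<in> negs n w)" using r by simp
next
  assume h: "0 < \<bar>y\<bar> \<and> \<bar>y\<bar> \<le> int n \<and> (y < 0 \<longleftrightarrow> nat \<bar>y\<bar> \<in> negs n w)"
  define x where "x = inv w y"
  have wx: "w x = y" using sp_inv_app[OF assms] x_def by simp
  have rx: "0 < \<bar>x\<bar> \<and> \<bar>x\<bar> \<le> int n" using sp_range[OF sp_inv[OF assms], of y] h x_def by simp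
  show "y \<in> w ` {1..int n}"
  proof (cases "x > 0")
    case True then show ?thesis using wx rx by force
  next
    case False
    then have wmx: "w (- x) = - y" "1 \<le> - x" "- x \<le> int n" using spD(2)[OF assms, of x] wx rx by auto
    show ?thesis
    proof (cases "y < 0")
      case True
      then obtain x' where "1 \<le> x'" "x' \<le> int n" "w x' = - int (nat \<bar>y\<bar>)" using h unfolding negs_def by auto
      then show ?thesis using True by force
    next
      case False
      then have yp: "y > 0" using h by auto
      have "nat \<bar>y\<bar> \<in> negs n w" unfolding negs_def
        using wmx h yp by (auto intro!: exI[of _ "-x"])
      then show ?thesis using h False by simp
    qed
  qed
qed

lemma vals_eq:
  assumes "u \<in> sp n" "v \<in> sp n" "negs n u = negs n v"
  shows "u ` {1..int n} = v ` {1..int n}"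
  using vals_char[OF assms(1)] vals_char[OF assms(2)] assms(3) by blast

lemma incr_le: "incr n f \<Longrightarrow> 1 \<le> x \<Longrightarrow> y \<le> int n \<Longrightarrow> 1 \<le> y \<Longrightarrow> x \<le> int n \<Longrightarrow> f x \<le> f y \<longleftrightarrow> x \<le> y"
  unfolding incr_def by (metis linorder_not_le order_less_imp_le order_less_le)

lemma incr_less: "incr n f \<Longrightarrow> 1 \<le> x \<Longrightarrow> y \<le> int n \<Longrightarrow> 1 \<le> y \<Longrightarrow> x \<le> int n \<Longrightarrow> f x < f y \<longleftrightarrow> x < y"
  unfolding incr_def by (metis linorder_neqE_linordered_idom order.asym)

lemma incr_inj: "incr n f \<Longrightarrow> inj_on f {1..int n}"
  unfolding inj_on_def by (metis atLeastAtMost_iff incr_le order_antisym order_refl)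

lemma pos_card:
  assumes "incr n f" "1 \<le> x" "x \<le> int n"
  shows "card {y \<in> f ` {1..int n}. y \<le> f x} = nat x"
proof -
  have "{y \<in> f ` {1..int n}. y \<le> f x} = f ` {1..x}"
    using incr_le[OF assms(1)] assms by auto
  moreover have "inj_on f {1..x}" using incr_inj[OF assms(1)] inj_on_subset assms(3) by fastforce
  ultimately show ?thesis by (simp add: card_image)
qed

lemma incr_eq_on:
  assumes "incr n f" "incr n g" "f ` {1..int n} = g ` {1..int n}" "1 \<le> x" "x \<le> int n"
  shows "f x = g x"
proof -
  have "f x \<in> g ` {1..int n}" using assms(3-5) by (metis atLeastAtMost_iff imageI)
  then obtain x' where x': "1 \<le> x'" "x' \<le> int n" "g x' = f x" by auto
  have "nat x = nat x'" using pos_card[OF assms(1,4,5)] pos_card[OF assms(2) x'(1,2)] x' assms(3) by simp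
  then have "x = x'" using x' assms(4) by simp
  then show ?thesis using x' assms by simp
qed

lemma incr_unique:
  assumes "u \<in> sp n" "v \<in> sp n" "incr n u" "incr n v" "negs n u = negs n v"
  shows "u = v"
  using sp_ext[OF assms(1,2)] incr_eq_on[OF assms(3,4) vals_eq[OF assms(1,2,5)]] by auto

lemma foldr_triv:
  "set xs \<inter> S = {} \<Longrightarrow> foldr (\<lambda>i f. (if i \<in> S then delta i else id) \<circ> f) xs g = g"
  by (induction xs) auto

lemma delta_sp: "1 \<le> j \<Longrightarrow> j \<le> n \<Longrightarrow> delta j \<in> sp n"
  unfolding delta_def by (rule word_eval_sp) (auto simp: words_def)

lemma delta_mono:
  assumes "j \<ge> 1" "a < b" "a \<ge> 1 \<or> a \<le> - (int j + 1)" "b \<ge> 1 \<or> b \<le> - (int j + 1)"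
  shows "delta j a < delta j b"
  using assms unfolding delta_formula[OF assms(1)] by (auto split: if_splits)

definition muS :: "nat \<Rightarrow> nat set \<Rightarrow> nat \<Rightarrow> int \<Rightarrow> int" where
  "muS n N j = foldr (\<lambda>i f. (if i \<in> N then delta i else id) \<circ> f) [j..<n+1] id"

lemma muS_end: "muS n N (n+1) = id" unfolding muS_def by simp

lemma muS_step: "j \<le> n \<Longrightarrow> muS n N j = (if j \<in> N then delta j else id) \<circ> muS n N (Suc j)"
proof -
  assume "j \<le> n"
  then have "[j..<n+1] = j # [Suc j..<n+1]" by (simp add: upt_conv_Cons)
  then show ?thesis unfolding muS_def by simp
qed

lemma mu_suffix:
  assumes "N \<subseteq> {1..n}" "1 \<le> j" "j \<le> n + 1"
  shows "muS n N j \<in> sp n \<and> incr n (muS n N j) \<and> negs n (muS n N j) = {i \<in> N. i \<ge> j}"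
  using assms(2,3)
proof (induction "n + 1 - j" arbitrary: j)
  case 0
  then have j: "j = n + 1" by simp
  have e: "muS n N j = id" using muS_end j by simp
  have n1: "negs n (muS n N j) = {i\<in>N. i\<ge>j}" unfolding e negs_def using assms(1) j by auto
  have i1: "incr n (muS n N j)" unfolding e incr_def by simp
  have s1: "muS n N j \<in> sp n" unfolding e by (rule sp_id)
  show ?case using n1 i1 s1 by blast
next
  case (Suc m)
  define Q where "Q = muS n N (Suc j)"
  have jn: "j \<le> n" using Suc by simp
  have IH: "Q \<in> sp n \<and> incr n Q \<and> negs n Q = {i \<in> N. i \<ge> Suc j}"
    using Suc.hyps(1)[of "Suc j"] Suc.hyps(2) Suc.prems unfolding Q_def by simp
  have eq: "muS n N j = (if j \<in> N then delta j else id) \<circ> Q"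
    using muS_step[OF jn] Q_def by simp
  show ?case
  proof (cases "j \<in> N")
    case False
    then have "{i \<in> N. i \<ge> Suc j} = {i \<in> N. i \<ge> j}" using le_eq_less_or_eq by auto
    then show ?thesis using eq IH False by simp
  next
    case True
    have Qs: "Q \<in> sp n" using IH by simp
    have dsp: "delta j \<in> sp n" using delta_sp Suc.prems jn by simp
    have vQ: "y \<in> Q ` {1..int n} \<Longrightarrow> y \<ge> 1 \<or> y \<le> - (int j + 1)" for y
    proof -
      assume "y \<in> Q ` {1..int n}"
      then have h: "0 < \<bar>y\<bar>" "y < 0 \<longleftrightarrow> nat \<bar>y\<bar> \<in> negs n Q" using vals_char[OF Qs, of y] by auto
      show ?thesis
      proof (cases "y < 0")
        case True
        then have "nat \<bar>y\<bar> \<ge> Suc j" using h IH by auto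
        then show ?thesis using True by linarith
      next
        case False then show ?thesis using h by linarith
      qed
    qed
    have inc: "incr n (delta j \<circ> Q)"
      unfolding incr_def
    proof (intro allI impI)
      fix x y :: int assume h: "1 \<le> x" "x < y" "y \<le> int n"
      have "Q x < Q y" using IH h unfolding incr_def by simp
      moreover have "Q x \<ge> 1 \<or> Q x \<le> - (int j + 1)" using vQ h by auto
      moreover have "Q y \<ge> 1 \<or> Q y \<le> - (int j + 1)" using vQ h by auto
      ultimately show "(delta j \<circ> Q) x < (delta j \<circ> Q) y" using delta_mono Suc.prems by simp
    qed
    have ng: "negs n (delta j \<circ> Q) = {i \<in> N. i \<ge> j}"
    proof (rule set_eqI, rule iffI)
      fix i assume "i \<in> negs n (delta j \<circ> Q)"
      then obtain x where x: "1 \<le> i" "i \<le> n" "1 \<le> x" "x \<le> int n" "delta j (Q x) = - int i"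
        unfolding negs_def by auto
      have v: "0 < \<bar>Q x\<bar> \<and> \<bar>Q x\<bar> \<le> int n \<and> (Q x < 0 \<longleftrightarrow> nat \<bar>Q x\<bar> \<in> negs n Q)"
        using vals_char[OF Qs, of "Q x"] x by auto
      show "i \<in> {i \<in> N. i \<ge> j}"
      proof (cases "Q x < 0")
        case True
        then have "nat \<bar>Q x\<bar> \<in> N" "nat \<bar>Q x\<bar> \<ge> Suc j" using v IH by auto
        then have "delta j (Q x) = Q x" using True Suc.prems by (simp add: delta_formula)
        then have "i = nat \<bar>Q x\<bar>" using x True by simp
        then show ?thesis using \<open>nat \<bar>Q x\<bar> \<in> N\<close> \<open>nat \<bar>Q x\<bar> \<ge> Suc j\<close> by auto
      next
        case False
        then have "Q x = 1" using x v Suc.prems by (simp add: delta_formula split: if_splits)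
        then show ?thesis using x True Suc.prems by (simp add: delta_formula)
      qed
    next
      fix i assume i: "i \<in> {i \<in> N. i \<ge> j}"
      have i1: "1 \<le> i" "i \<le> n" using i assms(1) by auto
      show "i \<in> negs n (delta j \<circ> Q)"
      proof (cases "i = j")
        case True
        have "nat \<bar>1::int\<bar> \<notin> negs n Q" using IH Suc.prems by auto
        then have "(1::int) \<in> Q ` {1..int n}" using vals_char[OF Qs, of 1] i1 by simp
        then obtain x where x: "1 \<le> x" "x \<le> int n" "Q x = 1" by auto
        then have "(delta j \<circ> Q) x = - int i" using True Suc.prems by (simp add: delta_formula)
        then show ?thesis unfolding negs_def using x i1 by blast
      next
        case False
        then have "- int i \<in> Q ` {1..int n}" using vals_char[OF Qs, of "- int i"] IH i i1 by auto
        then obtain x where x: "1 \<le> x" "x \<le> int n" "Q x = - int i" by auto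
        then have "delta j (Q x) = - int i" using False i Suc.prems by (simp add: delta_formula)
        then show ?thesis unfolding negs_def using x i1 by auto
      qed
    qed
    show ?thesis using eq True sp_comp[OF dsp Qs] inc ng by simp
  qed
qed

lemma mu_props:
  assumes "N \<subseteq> {1..n}"
  shows "mu n N \<in> sp n" "incr n (mu n N)" "negs n (mu n N) = N"
proof -
  have "{i \<in> N. i \<ge> 1} = N" using assms by auto
  then show "mu n N \<in> sp n" "incr n (mu n N)" "negs n (mu n N) = N"
    using mu_suffix[OF assms, of 1] unfolding mu_def muS_def by auto
qed

lemma mu_unique:
  assumes "N \<subseteq> {1..n}" "w \<in> sp n" "incr n w" "negs n w = N"
  shows "w = mu n N"
  using incr_unique[OF assms(2) mu_props(1)[OF assms(1)] assms(3) mu_props(2)[OF assms(1)]]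
    mu_props(3)[OF assms(1)] assms(4) by simp

lemma mu_empty: "mu n {} = id"
  unfolding mu_def by (rule foldr_triv) simp

lemma foldr_prefix:
  assumes "S \<subseteq> {1..v}" "v \<le> n"
  shows "foldr (\<lambda>i f. (if i \<in> S then delta i else id) \<circ> f) [1..<v+1] id = mu n S"
proof -
  have "[1..<n+1] = [1..<v+1] @ [v+1..<n+1]" using assms(2)
    using upt_add_eq_append[of 1 "v+1" "n-v"] by simp
  moreover have "foldr (\<lambda>i f. (if i \<in> S then delta i else id) \<circ> f) [v+1..<n+1] id = id"
    using assms(1) by (intro foldr_triv) auto
  ultimately show ?thesis unfolding mu_def by simp
qed

lemma delta_mu:
  assumes "1 \<le> i" "i \<le> n"
  shows "delta i = mu n {i}"
proof -
  have "foldr (\<lambda>k f. (if k \<in> {i} then delta k else id) \<circ> f) [1..<i+1] id = delta i"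
  proof -
    have "[1..<i+1] = [1..<i] @ [i]" using assms by simp
    moreover have "foldr (\<lambda>k f. (if k \<in> {i} then delta k else id) \<circ> f) [1..<i] (delta i) = delta i"
      by (rule foldr_triv) auto
    ultimately show ?thesis by simp
  qed
  then show ?thesis using foldr_prefix[of "{i}" i n] assms by simp
qed


definition Vset :: "nat \<Rightarrow> nat set \<Rightarrow> int set" where
  "Vset n N = {y. 0 < \<bar>y\<bar> \<and> \<bar>y\<bar> \<le> int n \<and> (y < 0 \<longleftrightarrow> nat \<bar>y\<bar> \<in> N)}"

definition Sn :: "nat \<Rightarrow> (int \<Rightarrow> int) set" where
  "Sn n = {p \<in> sp n. \<forall>i. 1 \<le> i \<and> i \<le> int n \<longrightarrow> p i > 0}"

definition PI :: "nat \<Rightarrow> (int \<Rightarrow> int) \<Rightarrow> int \<Rightarrow> int" where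
  "PI n w = inv (mu n (negs n w)) \<circ> w"

lemma vals_Vset: "w \<in> sp n \<Longrightarrow> w ` {1..int n} = Vset n (negs n w)"
  using vals_char[of w n] unfolding Vset_def by auto

lemma mu_vals: "N \<subseteq> {1..n} \<Longrightarrow> mu n N ` {1..int n} = Vset n N"
  using vals_Vset[OF mu_props(1)] mu_props(3) by metis

lemma Sn_sp: "p \<in> Sn n \<Longrightarrow> p \<in> sp n" unfolding Sn_def by simp

lemma Sn_negs: assumes "p \<in> Sn n" shows "negs n p = {}"
  using assms unfolding Sn_def negs_def by force

lemma Sn_vals: assumes "p \<in> Sn n" shows "p ` {1..int n} = {1..int n}"
proof -
  have "Vset n {} = {1..int n}" unfolding Vset_def by auto
  then show ?thesis using vals_Vset[OF Sn_sp[OF assms]] Sn_negs[OF assms] by simp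
qed

lemma Sn_range: "p \<in> Sn n \<Longrightarrow> 1 \<le> x \<Longrightarrow> x \<le> int n \<Longrightarrow> 1 \<le> p x \<and> p x \<le> int n"
proof -
  assume h: "p \<in> Sn n" "1 \<le> x" "x \<le> int n"
  then have "p x \<in> p ` {1..int n}" by auto
  then show ?thesis using Sn_vals[OF h(1)] by auto
qed

lemma Sn_comp: "p \<in> Sn n \<Longrightarrow> q \<in> Sn n \<Longrightarrow> p \<circ> q \<in> Sn n"
  using Sn_range[of q n] unfolding Sn_def by (auto intro: sp_comp)

lemma Sn_inv: assumes "p \<in> Sn n" shows "inv p \<in> Sn n"
proof -
  have s: "inv p \<in> sp n" using sp_inv Sn_sp assms by blast
  have "1 \<le> x \<Longrightarrow> x \<le> int n \<Longrightarrow> inv p x > 0" for x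
  proof -
    assume "1 \<le> x" "x \<le> int n"
    then obtain y where "1 \<le> y" "y \<le> int n" "p y = x" using Sn_vals[OF assms] by force
    then show ?thesis using sp_inv_app(2)[OF Sn_sp[OF assms]] by auto
  qed
  then show ?thesis using s unfolding Sn_def by auto
qed

lemma Sn_id: "id \<in> Sn n" unfolding Sn_def using sp_id by auto

lemma gen_Sn: "1 \<le> i \<Longrightarrow> i < n \<Longrightarrow> gen i \<in> Sn n"
  unfolding Sn_def using gen_sp[of i n] by (auto simp: genk)

lemma decomp:
  assumes "w \<in> sp n"
  shows "PI n w \<in> Sn n" "mu n (negs n w) \<circ> PI n w = w"
proof -
  let ?m = "mu n (negs n w)"
  have ms: "?m \<in> sp n" using mu_props(1)[OF negs_sub] .
  show "?m \<circ> PI n w = w" unfolding PI_def using sp_inv_app(1)[OF ms] by auto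
  have vv: "?m ` {1..int n} = w ` {1..int n}"
    using vals_eq[OF ms assms] mu_props(3)[OF negs_sub] by simp
  have "1 \<le> x \<Longrightarrow> x \<le> int n \<Longrightarrow> PI n w x > 0" for x
  proof -
    assume "1 \<le> x" "x \<le> int n"
    then have "w x \<in> ?m ` {1..int n}" using vv by auto
    then obtain y where "1 \<le> y" "y \<le> int n" "?m y = w x" by auto
    then show ?thesis unfolding PI_def using sp_inv_app(2)[OF ms, of y] by auto
  qed
  moreover have "PI n w \<in> sp n" unfolding PI_def using sp_comp[OF sp_inv[OF ms] assms] .
  ultimately show "PI n w \<in> Sn n" unfolding Sn_def by auto
qed

lemma decomp_unique:
  assumes "N \<subseteq> {1..n}" "p \<in> Sn n"
  shows "negs n (mu n N \<circ> p) = N" "PI n (mu n N \<circ> p) = p"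
proof -
  have "(mu n N \<circ> p) ` {1..int n} = mu n N ` (p ` {1..int n})"
    by (rule image_comp[symmetric])
  then have "(mu n N \<circ> p) ` {1..int n} = mu n N ` {1..int n}"
    using Sn_vals[OF assms(2)] by simp
  then have "Vset n (negs n (mu n N \<circ> p)) = Vset n N"
    using vals_Vset[OF sp_comp[OF mu_props(1)[OF assms(1)] Sn_sp[OF assms(2)]]] mu_vals[OF assms(1)] by simp
  moreover have "Vset n A = Vset n B \<Longrightarrow> A \<subseteq> {1..n} \<Longrightarrow> B \<subseteq> {1..n} \<Longrightarrow> A = B" for A B
  proof -
    assume h: "Vset n A = Vset n B" "A \<subseteq> {1..n}" "B \<subseteq> {1..n}"
    have "j \<in> A \<longleftrightarrow> j \<in> B" for j
    proof (cases "1 \<le> j \<and> j \<le> n")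
      case True
      then have "- int j \<in> Vset n A \<longleftrightarrow> - int j \<in> Vset n B" using h by simp
      then show ?thesis using True unfolding Vset_def by auto
    next
      case False then show ?thesis using h by auto
    qed
    then show "A = B" by auto
  qed
  ultimately show "negs n (mu n N \<circ> p) = N" using negs_sub assms(1) by blast
  then show "PI n (mu n N \<circ> p) = p" unfolding PI_def
    using sp_inv_app(2)[OF mu_props(1)[OF assms(1)]] by auto
qed

lemma Sn_decomp: "p \<in> Sn n \<Longrightarrow> negs n p = {} \<and> PI n p = p"
  using decomp_unique[of "{}" n p] mu_empty by simp

lemma Vset_one: "N \<subseteq> {1..n} \<Longrightarrow> 1 \<le> j \<Longrightarrow> j \<le> n \<Longrightarrow> (int j \<in> Vset n N \<longleftrightarrow> j \<notin> N) \<and> (- int j \<in> Vset n N \<longleftrightarrow> j \<in> N)"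
  unfolding Vset_def by auto

lemma negs_gen_comp:
  assumes "f \<in> sp n" "a < n"
  shows "negs n (gen a \<circ> f) = {j. 1 \<le> j \<and> j \<le> n \<and> - gen a (int j) \<in> f ` {1..int n}}"
proof -
  have e: "gen a (f x) = - int j \<longleftrightarrow> f x = - gen a (int j)" for x j
    using gen_invol[of a] spD(2)[OF gen_sp[OF assms(2)]] by metis
  have "(\<exists>x. 1 \<le> x \<and> x \<le> int n \<and> (gen a \<circ> f) x = - int j) \<longleftrightarrow> - gen a (int j) \<in> f ` {1..int n}" for j
  proof
    assume "\<exists>x. 1 \<le> x \<and> x \<le> int n \<and> (gen a \<circ> f) x = - int j"
    then obtain x where x: "1 \<le> x" "x \<le> int n" "gen a (f x) = - int j" by auto
    then have "f x = - gen a (int j)" using e[of x j] by simp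
    moreover have "f x \<in> f ` {1..int n}" using x by auto
    ultimately show "- gen a (int j) \<in> f ` {1..int n}" by simp
  next
    assume "- gen a (int j) \<in> f ` {1..int n}"
    then obtain x where "- gen a (int j) = f x" "x \<in> {1..int n}" by (rule imageE)
    then show "\<exists>x. 1 \<le> x \<and> x \<le> int n \<and> (gen a \<circ> f) x = - int j" using e by auto
  qed
  then show ?thesis unfolding negs_def by blast
qed

lemma gen0_mono: "y1 < y2 \<Longrightarrow> y1 \<noteq> 0 \<Longrightarrow> y2 \<noteq> 0 \<Longrightarrow> \<not> (y1 = -1 \<and> y2 = 1) \<Longrightarrow> gen 0 y1 < gen 0 y2"
  by (auto simp: gen0)

lemma genk_mono: "k \<ge> 1 \<Longrightarrow> y1 < y2 \<Longrightarrow> \<not> (y1 = int k \<and> y2 = int k + 1) \<Longrightarrow> \<not> (y1 = - (int k + 1) \<and> y2 = - int k)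
   \<Longrightarrow> gen k y1 < gen k y2"
  by (auto simp: genk)

lemma incr_comp:
  assumes "incr n f" "\<And>y1 y2. y1 \<in> f ` {1..int n} \<Longrightarrow> y2 \<in> f ` {1..int n} \<Longrightarrow> y1 < y2 \<Longrightarrow> g y1 < g y2"
  shows "incr n (g \<circ> f)"
  using assms unfolding incr_def by auto

lemma gen0_mu:
  assumes "N \<subseteq> {1..n}" "1 \<le> n"
  shows "gen 0 \<circ> mu n N = mu n (if 1 \<in> N then N - {1} else insert 1 N)"
proof (rule mu_unique)
  show "(if 1 \<in> N then N - {1} else insert 1 N) \<subseteq> {1..n}" using assms by auto
  show "gen 0 \<circ> mu n N \<in> sp n" using sp_comp[OF gen_sp mu_props(1)[OF assms(1)]] assms by simp
  show "incr n (gen 0 \<circ> mu n N)"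
  proof (rule incr_comp[OF mu_props(2)[OF assms(1)]])
    fix y1 y2 assume h: "y1 \<in> mu n N ` {1..int n}" "y2 \<in> mu n N ` {1..int n}" "y1 < y2"
    then have "y1 \<in> Vset n N" "y2 \<in> Vset n N" using mu_vals[OF assms(1)] by auto
    then have "y1 \<noteq> 0" "y2 \<noteq> 0" "\<not> (y1 = -1 \<and> y2 = 1)" unfolding Vset_def by auto
    then show "gen 0 y1 < gen 0 y2" using gen0_mono h by simp
  qed
  show "negs n (gen 0 \<circ> mu n N) = (if 1 \<in> N then N - {1} else insert 1 N)"
  proof -
    have e: "- gen 0 (int j) = (if j = 1 then 1 else - int j)" if "1 \<le> j" for j
      using that by (auto simp: gen0)
    have "{j. 1 \<le> j \<and> j \<le> n \<and> - gen 0 (int j) \<in> Vset n N} = (if 1 \<in> N then N - {1} else insert 1 N)"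
    proof (rule set_eqI)
      fix j
      show "j \<in> {j. 1 \<le> j \<and> j \<le> n \<and> - gen 0 (int j) \<in> Vset n N} \<longleftrightarrow> j \<in> (if 1 \<in> N then N - {1} else insert 1 N)"
      proof (cases "1 \<le> j \<and> j \<le> n")
        case True
        show ?thesis
        proof (cases "j = 1")
          case True
          then show ?thesis using e[of j] Vset_one[OF assms(1), of 1] assms(2) by auto
        next
          case False
          then show ?thesis using e[of j] Vset_one[OF assms(1), of j] \<open>1 \<le> j \<and> j \<le> n\<close> by auto
        qed
      next
        case False
        then show ?thesis using assms(1,2) by auto
      qed
    qed
    then show ?thesis
      unfolding negs_gen_comp[OF mu_props(1)[OF assms(1)], of 0, OF \<open>1 \<le> n\<close>[unfolded One_nat_def, THEN Suc_le_lessD]] mu_vals[OF assms(1)] .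
  qed
qed

lemma genk_mu_mixed:
  assumes "N \<subseteq> {1..n}" "1 \<le> k" "k < n" "(k \<in> N) \<noteq> (k + 1 \<in> N)"
  shows "gen k \<circ> mu n N = mu n (if k \<in> N then insert (k+1) (N - {k}) else insert k (N - {k+1}))"
proof (rule mu_unique)
  show "(if k \<in> N then insert (k+1) (N - {k}) else insert k (N - {k+1})) \<subseteq> {1..n}" using assms by auto
  show "gen k \<circ> mu n N \<in> sp n" using sp_comp[OF gen_sp mu_props(1)[OF assms(1)]] assms by simp
  show "incr n (gen k \<circ> mu n N)"
  proof (rule incr_comp[OF mu_props(2)[OF assms(1)]])
    fix y1 y2 assume h: "y1 \<in> mu n N ` {1..int n}" "y2 \<in> mu n N ` {1..int n}" "y1 < y2"
    then have "y1 \<in> Vset n N" "y2 \<in> Vset n N" using mu_vals[OF assms(1)] by auto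
    then have "\<not> (y1 = int k \<and> y2 = int k + 1)" "\<not> (y1 = - (int k + 1) \<and> y2 = - int k)"
      using assms(4) unfolding Vset_def by (auto simp: nat_add_distrib)
    then show "gen k y1 < gen k y2" using genk_mono h assms by simp
  qed
  show "negs n (gen k \<circ> mu n N) = (if k \<in> N then insert (k+1) (N - {k}) else insert k (N - {k+1}))"
    unfolding negs_gen_comp[OF mu_props(1)[OF assms(1)] assms(3)] mu_vals[OF assms(1)]
    using assms by (auto simp: Vset_def genk nat_add_distrib)
qed


definition posv :: "nat \<Rightarrow> nat set \<Rightarrow> nat \<Rightarrow> int" where
  "posv n N k = (if k \<in> N then inv (mu n N) (- (int k + 1)) else inv (mu n N) (int k))"

lemma Vset_pm: "y \<in> Vset n N \<Longrightarrow> - y \<notin> Vset n N"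
  unfolding Vset_def by auto

lemma mu_inv_pos:
  assumes "N \<subseteq> {1..n}" "y \<in> Vset n N"
  shows "1 \<le> inv (mu n N) y" "inv (mu n N) y \<le> int n" "mu n N (inv (mu n N) y) = y"
proof -
  obtain x where x: "x \<in> {1..int n}" "y = mu n N x" using assms mu_vals[OF assms(1)] by blast
  then have "inv (mu n N) y = x" using sp_inv_app(2)[OF mu_props(1)[OF assms(1)]] by simp
  then show "1 \<le> inv (mu n N) y" "inv (mu n N) y \<le> int n" "mu n N (inv (mu n N) y) = y" using x by auto
qed

lemma genk_fix: "k \<ge> 1 \<Longrightarrow> y \<noteq> int k \<Longrightarrow> y \<noteq> int k + 1 \<Longrightarrow> y \<noteq> - int k \<Longrightarrow> y \<noteq> - (int k + 1) \<Longrightarrow> gen k y = y"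
  by (simp add: genk)

lemma genk_mu_same:
  assumes N: "N \<subseteq> {1..n}" and k: "1 \<le> k" "k < n" and st: "(k \<in> N) = (k+1 \<in> N)"
  shows "1 \<le> posv n N k" "posv n N k < int n"
    "mu n N (posv n N k) = (if k \<in> N then - (int k + 1) else int k)"
    "mu n N (posv n N k + 1) = (if k \<in> N then - int k else int k + 1)"
    "gen k \<circ> mu n N = mu n N \<circ> gen (nat (posv n N k))"
proof -
  define m where "m = mu n N"
  define lo where "lo = (if k \<in> N then - (int k + 1) else int k)"
  define hi where "hi = lo + 1"
  have hi': "hi = (if k \<in> N then - int k else int k + 1)" unfolding hi_def lo_def by simp
  have ms: "m \<in> sp n" "incr n m" unfolding m_def using mu_props[OF N] by auto
  have lV: "lo \<in> Vset n N" unfolding lo_def Vset_def using k st N by (auto simp: nat_add_distrib)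
  have hV: "hi \<in> Vset n N" unfolding hi' Vset_def using k st N by (auto simp: nat_add_distrib)
  define p where "p = inv m lo"
  define q where "q = inv m hi"
  have pp: "1 \<le> p" "p \<le> int n" "m p = lo" using mu_inv_pos[OF N lV] unfolding p_def m_def by auto
  have qq: "1 \<le> q" "q \<le> int n" "m q = hi" using mu_inv_pos[OF N hV] unfolding q_def m_def by auto
  have pq: "p < q" using incr_less[OF ms(2) pp(1) qq(2) qq(1) pp(2)] pp qq hi_def by simp
  have q1: "q = p + 1"
  proof (rule ccontr)
    assume "q \<noteq> p + 1"
    then have "p + 1 < q" using pq by simp
    then have "m p < m (p + 1)" "m (p+1) < m q"
      using ms(2) pp qq unfolding incr_def by auto
    then show False using pp qq hi_def by simp
  qed
  have posv: "posv n N k = p" unfolding posv_def p_def m_def lo_def by simp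
  show "1 \<le> posv n N k" "posv n N k < int n" using posv pp qq q1 by auto
  show "mu n N (posv n N k) = (if k \<in> N then - (int k + 1) else int k)"
    using posv pp unfolding m_def lo_def by simp
  show "mu n N (posv n N k + 1) = (if k \<in> N then - int k else int k + 1)"
    using posv qq q1 unfolding m_def hi' by simp
  define i where "i = nat p"
  have i: "1 \<le> i" "i < n" "int i = p" using pp qq q1 unfolding i_def by auto
  have gk_lo: "gen k lo = hi" "gen k hi = lo" unfolding hi_def lo_def using k by (auto simp: genk)
  have "gen k \<circ> m = m \<circ> gen i"
  proof (rule sp_ext)
    show "gen k \<circ> m \<in> sp n" using sp_comp[OF gen_sp[OF k(2)] ms(1)] .
    show "m \<circ> gen i \<in> sp n" using sp_comp[OF ms(1) gen_sp[OF i(2)]] .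
    fix x :: int assume x: "1 \<le> x" "x \<le> int n"
    show "(gen k \<circ> m) x = (m \<circ> gen i) x"
    proof (cases "x = p")
      case True
      then have "gen i x = p + 1" using i by (simp add: genk)
      then show ?thesis using True pp qq q1 gk_lo by simp
    next
      case False
      show ?thesis
      proof (cases "x = p + 1")
        case True
        then have "gen i x = p" using i by (simp add: genk)
        then show ?thesis using True pp qq q1 gk_lo by simp
      next
        case False
        then have gi: "gen i x = x" using i \<open>x \<noteq> p\<close> x pp by (simp add: genk)
        have mV: "m x \<in> Vset n N" using mu_vals[OF N] x unfolding m_def by auto
        have "m x \<noteq> lo" using \<open>x \<noteq> p\<close> pp sp_inj[OF ms(1)] by metis
        moreover have "m x \<noteq> hi" using False qq q1 sp_inj[OF ms(1)] by metis
        moreover have "m x \<noteq> - lo" "m x \<noteq> - hi" using Vset_pm[OF lV] Vset_pm[OF hV] mV by auto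
        ultimately have "gen k (m x) = m x"
          using k unfolding lo_def hi' by (intro genk_fix) (auto split: if_splits)
        then show ?thesis using gi by simp
      qed
    qed
  qed
  then show "gen k \<circ> mu n N = mu n N \<circ> gen (nat (posv n N k))" using posv i unfolding m_def i_def by simp
qed

definition invs :: "nat \<Rightarrow> (int \<Rightarrow> int) \<Rightarrow> (int \<times> int) set" where
  "invs n p = {(a, b). 1 \<le> a \<and> a < b \<and> b \<le> int n \<and> p a > p b}"

lemma invs_finite: "finite (invs n p)"
proof -
  have "invs n p \<subseteq> {1..int n} \<times> {1..int n}" unfolding invs_def by auto
  then show ?thesis by (rule finite_subset) simp
qed

lemma genk_range: "1 \<le> i \<Longrightarrow> i < n \<Longrightarrow> 1 \<le> x \<Longrightarrow> x \<le> int n \<Longrightarrow> 1 \<le> gen i x \<and> gen i x \<le> int n"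
  by (auto simp: genk)

lemma invs_map:
  assumes i: "1 \<le> i" "i < n" and ab: "(a, b) \<in> invs n p - {(int i, int i + 1)}"
  shows "(gen i a, gen i b) \<in> invs n (p \<circ> gen i) - {(int i, int i + 1)}"
proof -
  have h: "1 \<le> a" "a < b" "b \<le> int n" "p a > p b" "(a, b) \<noteq> (int i, int i + 1)" using ab unfolding invs_def by auto
  have "gen i a < gen i b" using genk_mono[of i a b] i h by auto
  moreover have "1 \<le> gen i a" "gen i b \<le> int n" using genk_range[OF i] h by auto
  moreover have "(p \<circ> gen i) (gen i a) > (p \<circ> gen i) (gen i b)" using h gen_invol by simp
  moreover have "(gen i a, gen i b) \<noteq> (int i, int i + 1)"
  proof
    assume "(gen i a, gen i b) = (int i, int i + 1)"
    then have "gen i a = int i" "gen i b = int i + 1" by auto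
    then have "a = gen i (int i)" "b = gen i (int i + 1)" using gen_invol[of i a] gen_invol[of i b] by auto
    then have "a = int i + 1" "b = int i" using i by (auto simp: genk)
    then show False using h by simp
  qed
  ultimately show ?thesis unfolding invs_def by auto
qed

lemma invs_card_step:
  assumes i: "1 \<le> i" "i < n" and injp: "inj p"
  shows "card (invs n (p \<circ> gen i)) = (if p (int i) > p (int i + 1) then card (invs n p) - 1 else card (invs n p) + 1)"
    "p (int i) > p (int i + 1) \<Longrightarrow> card (invs n p) \<ge> 1"
proof -
  define E where "E = {(int i, int i + 1)}"
  define \<tau> where "\<tau> = (\<lambda>(a, b). (gen i a, gen i b))"
  have inj: "inj \<tau>"
  proof (rule injI)
    fix x y assume "\<tau> x = \<tau> y"
    moreover obtain a b c d where "x = (a, b)" "y = (c, d)" by (cases x, cases y)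
    ultimately have "gen i a = gen i c" "gen i b = gen i d" unfolding \<tau>_def by auto
    then have "gen i (gen i a) = gen i (gen i c)" "gen i (gen i b) = gen i (gen i d)" by auto
    then show "x = y" using \<open>x = (a, b)\<close> \<open>y = (c, d)\<close> gen_invol by simp
  qed
  have pp: "(p \<circ> gen i) \<circ> gen i = p" using gen_invol' by (metis comp_assoc comp_id)
  have "\<tau> ` (invs n p - E) = invs n (p \<circ> gen i) - E"
  proof
    show "\<tau> ` (invs n p - E) \<subseteq> invs n (p \<circ> gen i) - E"
      using invs_map[OF i] unfolding \<tau>_def E_def by auto
    show "invs n (p \<circ> gen i) - E \<subseteq> \<tau> ` (invs n p - E)"
    proof
      fix c assume c: "c \<in> invs n (p \<circ> gen i) - E"
      obtain a b where ab: "c = (a, b)" by (cases c)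
      have "(gen i a, gen i b) \<in> invs n ((p \<circ> gen i) \<circ> gen i) - E"
        using invs_map[OF i, of a b "p \<circ> gen i"] c ab unfolding E_def by auto
      then have "(gen i a, gen i b) \<in> invs n p - E" using pp by simp
      moreover have "\<tau> (gen i a, gen i b) = c" unfolding \<tau>_def using ab gen_invol by simp
      ultimately show "c \<in> \<tau> ` (invs n p - E)" by force
    qed
  qed
  then have c1: "card (invs n p - E) = card (invs n (p \<circ> gen i) - E)"
    using card_image[OF inj_on_subset[OF inj]] by (metis subset_UNIV)
  have g1: "gen i (int i) = int i + 1" "gen i (int i + 1) = int i" using i by (auto simp: genk)
  have e1: "(int i, int i + 1) \<in> invs n p \<longleftrightarrow> p (int i) > p (int i + 1)" unfolding invs_def using i by auto
  have e2: "(int i, int i + 1) \<in> invs n (p \<circ> gen i) \<longleftrightarrow> p (int i + 1) > p (int i)" unfolding invs_def using i g1 by auto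
  have f1: "finite (invs n p)" "finite (invs n (p \<circ> gen i))" using invs_finite by auto
  show "card (invs n (p \<circ> gen i)) = (if p (int i) > p (int i + 1) then card (invs n p) - 1 else card (invs n p) + 1)"
  proof (cases "p (int i) > p (int i + 1)")
    case True
    then have "card (invs n p - E) = card (invs n p) - 1" using e1 f1 unfolding E_def by (simp add: card_Diff_singleton)
    moreover have "invs n (p \<circ> gen i) - E = invs n (p \<circ> gen i)" using e2 True unfolding E_def by auto
    ultimately show ?thesis using c1 True by simp
  next
    case False
    have ne: "p (int i) \<noteq> p (int i + 1)" using injp by (metis inj_eq n_not_Suc_n of_nat_Suc of_nat_eq_iff add.commute)
    then have T: "p (int i + 1) > p (int i)" using False by simp
    then have "card (invs n (p \<circ> gen i) - E) = card (invs n (p \<circ> gen i)) - 1" using e2 f1 unfolding E_def by (simp add: card_Diff_singleton)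
    moreover have "invs n p - E = invs n p" using e1 False unfolding E_def by auto
    moreover have "card (invs n (p \<circ> gen i)) \<ge> 1" using e2 T f1 by (metis One_nat_def Suc_leI card_gt_0_iff empty_iff)
    ultimately show ?thesis using c1 False by simp
  qed
  show "p (int i) > p (int i + 1) \<Longrightarrow> card (invs n p) \<ge> 1"
    using e1 f1 by (metis One_nat_def Suc_leI card_gt_0_iff empty_iff)
qed


definition L :: "nat \<Rightarrow> (int \<Rightarrow> int) \<Rightarrow> nat" where
  "L n w = (\<Sum>j\<in>negs n w. j) + card (invs n (inv (PI n w)))"

definition des :: "nat \<Rightarrow> nat \<Rightarrow> (int \<Rightarrow> int) \<Rightarrow> bool" where
  "des n a w \<longleftrightarrow> L n (gen a \<circ> w) < L n w"

lemma negs_finite: "finite (negs n w)"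
  using negs_sub finite_subset by blast

lemma comp_decomp:
  assumes "w \<in> sp n" "f \<circ> mu n (negs n w) = mu n N' \<circ> q" "N' \<subseteq> {1..n}" "q \<in> Sn n"
  shows "negs n (f \<circ> w) = N'" "PI n (f \<circ> w) = q \<circ> PI n w"
proof -
  have "f \<circ> w = f \<circ> mu n (negs n w) \<circ> PI n w" using decomp(2)[OF assms(1)] by (simp add: comp_assoc)
  then have e: "f \<circ> w = mu n N' \<circ> (q \<circ> PI n w)" using assms(2) by (simp add: comp_assoc)
  have "q \<circ> PI n w \<in> Sn n" using Sn_comp[OF assms(4) decomp(1)[OF assms(1)]] .
  then show "negs n (f \<circ> w) = N'" "PI n (f \<circ> w) = q \<circ> PI n w"
    using decomp_unique[OF assms(3)] e by auto
qed

lemma step0: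
  assumes "w \<in> sp n" "1 \<le> n"
  defines "N \<equiv> negs n w"
  shows "negs n (gen 0 \<circ> w) = (if 1 \<in> N then N - {1} else insert 1 N)" "PI n (gen 0 \<circ> w) = PI n w"
    "L n (gen 0 \<circ> w) = (if 1 \<in> N then L n w - 1 else L n w + 1)" "1 \<in> N \<Longrightarrow> L n w \<ge> 1"
proof -
  have N: "N \<subseteq> {1..n}" unfolding N_def by (rule negs_sub)
  have sub: "(if 1 \<in> N then N - {1} else insert 1 N) \<subseteq> {1..n}" using N assms(2) by auto
  have e: "gen 0 \<circ> mu n N = mu n (if 1 \<in> N then N - {1} else insert 1 N) \<circ> id"
    using gen0_mu[OF N assms(2)] by simp
  show ng: "negs n (gen 0 \<circ> w) = (if 1 \<in> N then N - {1} else insert 1 N)" "PI n (gen 0 \<circ> w) = PI n w"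
    using comp_decomp[OF assms(1) e[unfolded N_def] sub[unfolded N_def] Sn_id] unfolding N_def by auto
  have fN: "finite N" unfolding N_def by (rule negs_finite)
  have "(\<Sum>j\<in>(if 1 \<in> N then N - {1} else insert 1 N). j) = (if 1 \<in> N then (\<Sum>j\<in>N. j) - 1 else (\<Sum>j\<in>N. j) + 1)"
    using fN by (auto simp: sum_diff1_nat)
  moreover have "1 \<in> N \<Longrightarrow> (\<Sum>j\<in>N. j) \<ge> 1" using fN by (metis member_le_sum zero_le)
  ultimately show "L n (gen 0 \<circ> w) = (if 1 \<in> N then L n w - 1 else L n w + 1)" "1 \<in> N \<Longrightarrow> L n w \<ge> 1"
    unfolding L_def using ng N_def by auto
qed

lemma step_mixed:
  assumes "w \<in> sp n" "1 \<le> k" "k < n"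
  defines "N \<equiv> negs n w"
  assumes st: "(k \<in> N) \<noteq> (k + 1 \<in> N)"
  shows "negs n (gen k \<circ> w) = (if k \<in> N then insert (k+1) (N - {k}) else insert k (N - {k+1}))"
    "PI n (gen k \<circ> w) = PI n w"
    "L n (gen k \<circ> w) = (if k \<in> N then L n w + 1 else L n w - 1)" "k \<notin> N \<Longrightarrow> L n w \<ge> 1"
proof -
  have N: "N \<subseteq> {1..n}" unfolding N_def by (rule negs_sub)
  let ?N' = "(if k \<in> N then insert (k+1) (N - {k}) else insert k (N - {k+1}))"
  have sub: "?N' \<subseteq> {1..n}" using N assms(2,3) by auto
  have e: "gen k \<circ> mu n N = mu n ?N' \<circ> id"
    using genk_mu_mixed[OF N assms(2,3) st] by simp
  show ng: "negs n (gen k \<circ> w) = ?N'" "PI n (gen k \<circ> w) = PI n w"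
    using comp_decomp[OF assms(1) e[unfolded N_def] sub[unfolded N_def] Sn_id] unfolding N_def by auto
  have fN: "finite N" unfolding N_def by (rule negs_finite)
  have s1: "(\<Sum>j\<in>?N'. j) = (if k \<in> N then (\<Sum>j\<in>N. j) + 1 else (\<Sum>j\<in>N. j) - 1)"
  proof (cases "k \<in> N")
    case True
    then have "k + 1 \<notin> N" using st by simp
    then have "(\<Sum>j\<in>?N'. j) = (\<Sum>j\<in>N - {k}. j) + (k + 1)" using True fN by (simp add: sum.insert)
    moreover have "(\<Sum>j\<in>N. j) = (\<Sum>j\<in>N - {k}. j) + k" using True fN by (metis add.commute sum.remove)
    ultimately show ?thesis using True by simp
  next
    case False
    then have "k + 1 \<in> N" using st by simp
    then have "(\<Sum>j\<in>?N'. j) = (\<Sum>j\<in>N - {k+1}. j) + k" using False fN by (simp add: sum.insert)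
    moreover have "(\<Sum>j\<in>N. j) = (\<Sum>j\<in>N - {k+1}. j) + (k + 1)" using \<open>k+1 \<in> N\<close> fN by (metis add.commute sum.remove)
    ultimately show ?thesis using False by simp
  qed
  have "k \<notin> N \<Longrightarrow> (\<Sum>j\<in>N. j) \<ge> 1" using fN st by (metis le_add2 member_le_sum zero_le order_trans)
  then show "L n (gen k \<circ> w) = (if k \<in> N then L n w + 1 else L n w - 1)" "k \<notin> N \<Longrightarrow> L n w \<ge> 1"
    unfolding L_def using ng s1 N_def by auto
qed

lemma step_same:
  assumes "w \<in> sp n" "1 \<le> k" "k < n"
  defines "N \<equiv> negs n w"
  assumes st: "(k \<in> N) = (k + 1 \<in> N)"
  defines "i \<equiv> nat (posv n N k)"
  shows "1 \<le> i" "i < n" "negs n (gen k \<circ> w) = N" "PI n (gen k \<circ> w) = gen i \<circ> PI n w"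
    "L n (gen k \<circ> w) = (if inv (PI n w) (int i) > inv (PI n w) (int i + 1) then L n w - 1 else L n w + 1)"
    "inv (PI n w) (int i) > inv (PI n w) (int i + 1) \<Longrightarrow> L n w \<ge> 1"
proof -
  have N: "N \<subseteq> {1..n}" unfolding N_def by (rule negs_sub)
  have i: "1 \<le> i" "i < n" using genk_mu_same(1,2)[OF N assms(2,3) st] unfolding i_def by auto
  show "1 \<le> i" "i < n" using i by auto
  have e: "gen k \<circ> mu n N = mu n N \<circ> gen i"
    using genk_mu_same(5)[OF N assms(2,3) st] unfolding i_def .
  show ng: "negs n (gen k \<circ> w) = N" "PI n (gen k \<circ> w) = gen i \<circ> PI n w"
    using comp_decomp[OF assms(1) e[unfolded N_def] N[unfolded N_def] gen_Sn[OF i]] unfolding N_def by auto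
  define p where "p = inv (PI n w)"
  have ps: "PI n w \<in> sp n" using decomp(1)[OF assms(1)] Sn_sp by blast
  have ip: "inv (gen i \<circ> PI n w) = p \<circ> gen i"
    unfolding p_def using o_inv_distrib[OF gen_bij spD(1)[OF ps]] gen_inv by simp
  have injp: "inj p" unfolding p_def using sp_inv[OF ps] spD(1) bij_is_inj by blast
  show "L n (gen k \<circ> w) = (if inv (PI n w) (int i) > inv (PI n w) (int i + 1) then L n w - 1 else L n w + 1)"
    "inv (PI n w) (int i) > inv (PI n w) (int i + 1) \<Longrightarrow> L n w \<ge> 1"
    unfolding L_def ng ip using invs_card_step[OF i injp] unfolding p_def N_def by auto
qed

lemma L_step:
  assumes "w \<in> sp n" "a < n"
  shows "L n (gen a \<circ> w) + 1 = L n w \<or> L n (gen a \<circ> w) = L n w + 1"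
proof (cases "a = 0")
  case True
  then show ?thesis using step0[OF assms(1)] assms(2) by (cases "1 \<in> negs n w") auto
next
  case False
  then have k: "1 \<le> a" by simp
  show ?thesis
  proof (cases "(a \<in> negs n w) = (a + 1 \<in> negs n w)")
    case True
    show ?thesis using step_same(5,6)[OF assms(1) k assms(2) True] by (auto split: if_splits)
  next
    case False
    show ?thesis using step_mixed(3,4)[OF assms(1) k assms(2) False] by (auto split: if_splits)
  qed
qed

lemma des_L: "w \<in> sp n \<Longrightarrow> a < n \<Longrightarrow> des n a w \<longleftrightarrow> L n (gen a \<circ> w) + 1 = L n w"
  using L_step[of w n a] unfolding des_def by auto

lemma ndes_L: "w \<in> sp n \<Longrightarrow> a < n \<Longrightarrow> \<not> des n a w \<longleftrightarrow> L n (gen a \<circ> w) = L n w + 1"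
  using L_step[of w n a] unfolding des_def by auto

lemma L_id: "L n id = 0"
proof -
  have "negs n id = {}" unfolding negs_def by auto
  moreover have "PI n id = id" using Sn_decomp[OF Sn_id] by simp
  moreover have "invs n id = {}" unfolding invs_def by auto
  ultimately show ?thesis unfolding L_def by (simp add: inv_id)
qed

lemma L_id': "L n (\<lambda>x. x) = 0" using L_id by (simp add: id_def)

lemma incr_from_steps:
  assumes "\<And>i. 1 \<le> i \<Longrightarrow> i < int n \<Longrightarrow> p i < p (i + 1)"
  shows "incr n p"
  unfolding incr_def
proof (intro allI impI)
  fix x y :: int assume h: "1 \<le> x" "x < y" "y \<le> int n"
  have "x + int m + 1 \<le> int n \<longrightarrow> p x < p (x + int m + 1)" for m :: nat
  proof (induction m)
    case 0 then show ?case using assms h by auto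
  next
    case (Suc m)
    then show ?case using assms[of "x + int m + 1"] h by auto
  qed
  from this[of "nat (y - x - 1)"] show "p x < p y" using h by simp
qed

lemma des_exists:
  assumes "w \<in> sp n" "w \<noteq> id"
  shows "\<exists>a < n. des n a w"
proof -
  define N where "N = negs n w"
  have N: "N \<subseteq> {1..n}" unfolding N_def by (rule negs_sub)
  show ?thesis
  proof (cases "N = {}")
    case False
    show ?thesis
    proof (cases "1 \<in> N")
      case True
      then have n1: "1 \<le> n" using N by auto
      then have "des n 0 w" using step0(3,4)[OF assms(1) n1] True unfolding des_def N_def by auto
      then show ?thesis using n1 by (intro exI[of _ 0]) auto
    next
      case F1: False
      define j where "j = Min N"
      have fN: "finite N" unfolding N_def by (rule negs_finite)
      have jN: "j \<in> N" unfolding j_def using Min_in[OF fN False] .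
      have j2: "j \<ge> 2" using jN F1 N by (cases "j = 1") auto
      have jm: "j - 1 \<notin> N"
      proof
        assume "j - 1 \<in> N"
        then have "j \<le> j - 1" unfolding j_def using Min_le[OF fN] by auto
        then show False using j2 by simp
      qed
      define k where "k = j - 1"
      have k: "1 \<le> k" "k < n" "k \<notin> N" "k + 1 \<in> N" using j2 jN jm N unfolding k_def by auto
      have "des n k w" using step_mixed(3,4)[OF assms(1) k(1,2)] k unfolding des_def N_def by auto
      then show ?thesis using k by auto
    qed
  next
    case True
    have ps: "PI n w \<in> Sn n" using decomp(1)[OF assms(1)] .
    have wpi: "w = PI n w" using decomp(2)[OF assms(1)] True mu_empty unfolding N_def by simp
    define p where "p = inv (PI n w)"
    have pS: "p \<in> Sn n" unfolding p_def using Sn_inv[OF ps] .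
    have "\<exists>i. 1 \<le> i \<and> i < int n \<and> p i > p (i + 1)"
    proof (rule ccontr)
      assume "\<not> ?thesis"
      then have "\<And>i. 1 \<le> i \<Longrightarrow> i < int n \<Longrightarrow> p i < p (i + 1)"
        using sp_inj[OF Sn_sp[OF pS]] by (metis linorder_neqE_linordered_idom add_cancel_left_right one_neq_zero)
      then have "incr n p" by (rule incr_from_steps)
      then have "p = id" using incr_unique[OF Sn_sp[OF pS] sp_id] Sn_negs[OF pS] Sn_negs[OF Sn_id]
        by (auto simp: incr_def)
      then have "PI n w = id" unfolding p_def using spD(1)[OF Sn_sp[OF ps]]
        by (metis bij_is_inj inv_id inv_inv_eq)
      then show False using wpi assms(2) by simp
    qed
    then obtain i where i: "1 \<le> i" "i < int n" "p i > p (i + 1)" by auto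
    define k where "k = nat i"
    have k: "1 \<le> k" "k < n" "int k = i" using i unfolding k_def by auto
    have st: "(k \<in> negs n w) = (k + 1 \<in> negs n w)" using True unfolding N_def by simp
    have pv: "posv n (negs n w) k = i" using True k unfolding N_def posv_def by (simp add: mu_empty)
    have "des n k w" using step_same(5,6)[OF assms(1) k(1,2) st] pv k i unfolding des_def p_def by auto
    then show ?thesis using k by auto
  qed
qed

lemma L_word: "ws \<in> words n \<Longrightarrow> L n (word_eval ws) \<le> length ws"
proof (induction ws)
  case Nil then show ?case by (simp add: word_eval_Nil L_id L_id')
next
  case (Cons a ws)
  then have "ws \<in> words n" "a < n" unfolding words_def by auto
  then show ?case using Cons.IH L_step[OF word_eval_sp[OF \<open>ws \<in> words n\<close>] \<open>a < n\<close>]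
    unfolding word_eval_Cons length_Cons by linarith
qed

lemma word_exists: "w \<in> sp n \<Longrightarrow> \<exists>ws \<in> words n. length ws = L n w \<and> word_eval ws = w"
proof (induction "L n w" arbitrary: w rule: less_induct)
  case less
  show ?case
  proof (cases "w = id")
    case True
    have "[] \<in> words n" by (simp add: words_def)
    moreover have "length [] = L n w" using L_id[of n] True by simp
    moreover have "word_eval [] = w" using word_eval_Nil True by simp
    ultimately show ?thesis by blast
  next
    case False
    then obtain a where a: "a < n" "des n a w" using des_exists[OF less.prems] by auto
    have l: "L n (gen a \<circ> w) + 1 = L n w" using des_L[OF less.prems a(1)] a by simp
    have s: "gen a \<circ> w \<in> sp n" using sp_comp[OF gen_sp[OF a(1)] less.prems] .
    obtain ws where ws: "ws \<in> words n" "length ws = L n (gen a \<circ> w)" "word_eval ws = gen a \<circ> w"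
      using less.hyps[of "gen a \<circ> w"] l s by auto
    have "a # ws \<in> words n" using ws a unfolding words_def by auto
    moreover have "word_eval (a # ws) = w" using ws by (simp add: word_eval_Cons comp_assoc[symmetric] gen_invol')
    ultimately show ?thesis using ws l by (intro bexI[of _ "a # ws"]) auto
  qed
qed

lemma cox_len: assumes "w \<in> sp n" shows "coxeter_length n w = L n w"
  unfolding coxeter_length_def
proof (rule Least_equality)
  show "\<exists>ws\<in>words n. length ws = L n w \<and> word_eval ws = w" using word_exists[OF assms] .
  fix y assume "\<exists>ws\<in>words n. length ws = y \<and> word_eval ws = w"
  then show "L n w \<le> y" using L_word by blast
qed

lemma rw_iff: "reduced_word n w ws \<longleftrightarrow> ws \<in> words n \<and> word_eval ws = w \<and> length ws = L n w"
  unfolding reduced_word_def using cox_len word_eval_sp by metis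

lemma rw_sp: "reduced_word n w ws \<Longrightarrow> w \<in> sp n"
  unfolding rw_iff using word_eval_sp by blast

lemma rw_exists: "w \<in> sp n \<Longrightarrow> \<exists>ws. reduced_word n w ws"
  unfolding rw_iff using word_exists by blast

lemma rw_Nil: "reduced_word n w [] \<longleftrightarrow> w = id"
  unfolding rw_iff by (auto simp: word_eval_Nil words_def L_id)

lemma rw_Cons:
  assumes "reduced_word n w (a # u)"
  shows "a < n" "des n a w" "reduced_word n (gen a \<circ> w) u"
proof -
  have h: "a # u \<in> words n" "word_eval (a # u) = w" "length (a # u) = L n w" using assms unfolding rw_iff by auto
  show a: "a < n" using h unfolding words_def by auto
  have u: "u \<in> words n" using h unfolding words_def by auto
  have we: "word_eval u = gen a \<circ> w" using h(2) by (auto simp: word_eval_Cons comp_assoc[symmetric] gen_invol')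
  have ws: "w \<in> sp n" using rw_sp assms by blast
  have "L n (gen a \<circ> w) \<le> length u" using L_word[OF u] we by simp
  then have "L n (gen a \<circ> w) + 1 = L n w" using L_step[OF ws a] h(3) by auto
  then show "des n a w" using des_L[OF ws a] by simp
  show "reduced_word n (gen a \<circ> w) u" unfolding rw_iff using u we h(3) \<open>L n (gen a \<circ> w) + 1 = L n w\<close> by simp
qed

lemma rw_Cons_intro:
  assumes "a < n" "des n a w" "reduced_word n (gen a \<circ> w) t" "w \<in> sp n"
  shows "reduced_word n w (a # t)"
proof -
  have h: "t \<in> words n" "word_eval t = gen a \<circ> w" "length t = L n (gen a \<circ> w)" using assms(3) unfolding rw_iff by auto
  have "L n (gen a \<circ> w) + 1 = L n w" using des_L[OF assms(4,1)] assms(2) by simp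
  moreover have "word_eval (a # t) = w" using h by (simp add: word_eval_Cons comp_assoc[symmetric] gen_invol')
  moreover have "a # t \<in> words n" using h assms(1) unfolding words_def by auto
  ultimately show ?thesis unfolding rw_iff using h by simp
qed


definition avoid321 :: "nat \<Rightarrow> (int \<Rightarrow> int) \<Rightarrow> bool" where
  "avoid321 n p \<longleftrightarrow> \<not> (\<exists>a b c. 1 \<le> a \<and> a < b \<and> b < c \<and> c \<le> int n \<and> p a > p b \<and> p b > p c)"

definition Cp :: "nat \<Rightarrow> nat set \<Rightarrow> (int \<Rightarrow> int) \<Rightarrow> bool" where
  "Cp n N \<pi> \<longleftrightarrow> avoid321 n (inv \<pi>) \<and> N \<subseteq> {1..first_valley n \<pi>} \<and> (1 \<in> Des_inv n \<pi> \<longrightarrow> card N \<le> 1)"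

definition CC :: "nat \<Rightarrow> (int \<Rightarrow> int) \<Rightarrow> bool" where
  "CC n w \<longleftrightarrow> Cp n (negs n w) (PI n w)"

lemma Des_finite: "finite (Des_inv n \<pi>)"
proof -
  have "Des_inv n \<pi> \<subseteq> {1..int n}" unfolding Des_inv_def by auto
  then show ?thesis by (rule finite_subset) simp
qed

lemma Des_finite1: "finite (Des_inv n \<pi> - {1})"
  using Des_finite by simp

lemma fv_le: "first_valley n \<pi> \<le> n"
proof (cases "Des_inv n \<pi> - {1} \<noteq> {}")
  case True
  have "Min (Des_inv n \<pi> - {1}) \<in> Des_inv n \<pi> - {1}" using Min_in[OF Des_finite1 True] .
  then have "Min (Des_inv n \<pi> - {1}) \<le> int n" unfolding Des_inv_def by auto
  then show ?thesis unfolding first_valley_def using True by simp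
next
  case False then show ?thesis unfolding first_valley_def by simp
qed

lemma fv_lower: "j \<in> Des_inv n \<pi> \<Longrightarrow> j \<noteq> 1 \<Longrightarrow> int (first_valley n \<pi>) \<le> j"
proof -
  assume h: "j \<in> Des_inv n \<pi>" "j \<noteq> 1"
  then have ne: "Des_inv n \<pi> - {1} \<noteq> {}" by auto
  have "Min (Des_inv n \<pi> - {1}) \<le> j" using h by (intro Min_le[OF Des_finite1]) auto
  moreover have "Min (Des_inv n \<pi> - {1}) \<in> Des_inv n \<pi> - {1}" using Min_in[OF Des_finite1 ne] .
  moreover then have "Min (Des_inv n \<pi> - {1}) \<ge> 1" unfolding Des_inv_def by auto
  ultimately show ?thesis unfolding first_valley_def using ne by simp
qed

lemma fv_mem: "first_valley n \<pi> < n \<Longrightarrow> int (first_valley n \<pi>) \<in> Des_inv n \<pi> \<and> first_valley n \<pi> \<ge> 2"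
proof -
  assume h: "first_valley n \<pi> < n"
  then have ne: "Des_inv n \<pi> - {1} \<noteq> {}" unfolding first_valley_def by (auto split: if_splits)
  have m: "Min (Des_inv n \<pi> - {1}) \<in> Des_inv n \<pi> - {1}" using Min_in[OF Des_finite1 ne] .
  then have "Min (Des_inv n \<pi> - {1}) \<ge> 2" unfolding Des_inv_def by auto
  then show ?thesis using m ne unfolding first_valley_def by simp
qed

lemma fv_geI:
  assumes "M \<le> n" "\<And>j. j \<in> Des_inv n \<pi> \<Longrightarrow> j \<noteq> 1 \<Longrightarrow> int M \<le> j"
  shows "M \<le> first_valley n \<pi>"
proof (cases "first_valley n \<pi> < n")
  case True
  then show ?thesis using fv_mem[OF True] assms(2) by fastforce
next
  case False then show ?thesis using assms(1) by simp
qed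

lemma fv_ge1: "1 \<le> n \<Longrightarrow> 1 \<le> first_valley n \<pi>"
  using fv_mem[of n \<pi>] by (cases "first_valley n \<pi> < n") auto

lemma inv_gen_comp: "\<pi> \<in> sp n \<Longrightarrow> inv (gen i \<circ> \<pi>) = inv \<pi> \<circ> gen i"
  using o_inv_distrib[OF gen_bij spD(1)] gen_inv by metis

lemma Des_iff: "\<pi> \<in> sp n \<Longrightarrow> 1 \<le> i \<Longrightarrow> i < n \<Longrightarrow> int i \<in> Des_inv n \<pi> \<longleftrightarrow> inv \<pi> (int i) > inv \<pi> (int i + 1)"
  unfolding Des_inv_def by auto

lemma Des_swap:
  assumes "\<pi> \<in> sp n" "1 \<le> i" "i < n" "j \<in> Des_inv n (gen i \<circ> \<pi>)" "j \<noteq> int i - 1" "j \<noteq> int i" "j \<noteq> int i + 1"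
  shows "j \<in> Des_inv n \<pi>"
proof -
  have "gen i j = j" "gen i (j + 1) = j + 1" using assms(2,4-7) unfolding Des_inv_def by (auto simp: genk)
  then show ?thesis using assms(4) unfolding Des_inv_def inv_gen_comp[OF assms(1)] by auto
qed

lemma Des_swap_self:
  assumes "\<pi> \<in> sp n" "1 \<le> i" "i < n" "inv \<pi> (int i) > inv \<pi> (int i + 1)"
  shows "int i \<notin> Des_inv n (gen i \<circ> \<pi>)"
  using assms unfolding Des_inv_def inv_gen_comp[OF assms(1)] by (auto simp: genk)

lemma pat_transfer:
  assumes i: "1 \<le> i" "i < n"
    and abc: "1 \<le> a" "a < b" "b < c" "c \<le> int n" "q a > q b" "q b > q c"
    and ne: "(a, b) \<noteq> (int i, int i + 1)" "(b, c) \<noteq> (int i, int i + 1)"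
  shows "\<not> avoid321 n (q \<circ> gen i)"
proof -
  have "gen i a < gen i b" using genk_mono[of i a b] i abc ne by auto
  moreover have "gen i b < gen i c" using genk_mono[of i b c] i abc ne by auto
  moreover have "1 \<le> gen i a" "gen i c \<le> int n" using genk_range[OF i] abc by auto
  moreover have "(q \<circ> gen i) (gen i a) > (q \<circ> gen i) (gen i b)" "(q \<circ> gen i) (gen i b) > (q \<circ> gen i) (gen i c)"
    using abc gen_invol by auto
  ultimately show ?thesis unfolding avoid321_def by blast
qed

lemma avoid_swap:
  assumes i: "1 \<le> i" "i < n" and av: "avoid321 n p" and d: "p (int i) > p (int i + 1)"
  shows "avoid321 n (p \<circ> gen i)"
proof (rule ccontr)
  assume "\<not> avoid321 n (p \<circ> gen i)"
  then obtain a b c where abc: "1 \<le> a" "a < b" "b < c" "c \<le> int n" "(p \<circ> gen i) a > (p \<circ> gen i) b" "(p \<circ> gen i) b > (p \<circ> gen i) c"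
    unfolding avoid321_def by blast
  have g: "gen i (int i) = int i + 1" "gen i (int i + 1) = int i" using i by (auto simp: genk)
  have "(a, b) \<noteq> (int i, int i + 1)" using abc(5) g d by auto
  moreover have "(b, c) \<noteq> (int i, int i + 1)" using abc(6) g d by auto
  ultimately have "\<not> avoid321 n ((p \<circ> gen i) \<circ> gen i)" using pat_transfer[OF i abc] by blast
  then show False using av by (simp add: comp_assoc gen_invol')
qed

lemma desc_between:
  fixes p :: "int \<Rightarrow> int"
  assumes "1 \<le> a" "a < b" "b \<le> int n" "p a > p b"
  shows "\<exists>i. a \<le> i \<and> i < b \<and> p i > p (i + 1)"
proof (rule ccontr)
  assume nt: "\<not> ?thesis"
  have h: "p i \<le> p (i + 1)" if "a \<le> i" "i < b" for i
  proof (rule ccontr)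
    assume "\<not> p i \<le> p (i + 1)"
    then have "p i > p (i + 1)" by simp
    then have "\<exists>i. a \<le> i \<and> i < b \<and> p i > p (i + 1)" using that by (intro exI[of _ i]) simp
    then show False using nt by simp
  qed
  have "a + int m \<le> b \<longrightarrow> p a \<le> p (a + int m)" for m :: nat
  proof (induction m)
    case 0 then show ?case by simp
  next
    case (Suc m)
    have e: "a + int (Suc m) = a + int m + 1" by simp
    show ?case unfolding e using Suc h[of "a + int m"] by auto
  qed
  from this[of "nat (b - a)"] show False using assms by simp
qed

lemma abs_inj_Vset: "inj_on (\<lambda>y. nat \<bar>y\<bar>) (Vset n N)"
  unfolding inj_on_def Vset_def by (auto simp: abs_if split: if_splits)

lemma posv_out:
  assumes N: "N \<subseteq> {1..n}" and k: "1 \<le> k" "k \<le> n" "k \<notin> N"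
  shows "posv n N k = int (card (N \<union> {1..k}))"
proof -
  have kV: "int k \<in> Vset n N" using k unfolding Vset_def by auto
  have p: "1 \<le> posv n N k" "posv n N k \<le> int n" "mu n N (posv n N k) = int k"
    using mu_inv_pos[OF N kV] k(3) unfolding posv_def by auto
  have "card {y \<in> mu n N ` {1..int n}. y \<le> mu n N (posv n N k)} = nat (posv n N k)"
    using pos_card[OF mu_props(2)[OF N] p(1,2)] .
  then have c: "card {y \<in> Vset n N. y \<le> int k} = nat (posv n N k)" using p(3) mu_vals[OF N] by simp
  have "(\<lambda>y. nat \<bar>y\<bar>) ` {y \<in> Vset n N. y \<le> int k} = N \<union> {1..k}"
  proof
    show "(\<lambda>y. nat \<bar>y\<bar>) ` {y \<in> Vset n N. y \<le> int k} \<subseteq> N \<union> {1..k}"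
      unfolding Vset_def by (auto simp: abs_if split: if_splits)
    show "N \<union> {1..k} \<subseteq> (\<lambda>y. nat \<bar>y\<bar>) ` {y \<in> Vset n N. y \<le> int k}"
    proof
      fix j assume j: "j \<in> N \<union> {1..k}"
      show "j \<in> (\<lambda>y. nat \<bar>y\<bar>) ` {y \<in> Vset n N. y \<le> int k}"
      proof (cases "j \<in> N")
        case True
        then have "- int j \<in> {y \<in> Vset n N. y \<le> int k}" using N unfolding Vset_def by auto
        then show ?thesis by (metis (lifting) image_eqI abs_minus_cancel nat_int abs_of_nat)
      next
        case False
        then have "int j \<in> {y \<in> Vset n N. y \<le> int k}" using j k unfolding Vset_def by auto
        then show ?thesis by (metis (lifting) image_eqI nat_int abs_of_nat)
      qed
    qed
  qed
  then have "card (N \<union> {1..k}) = card {y \<in> Vset n N. y \<le> int k}"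
    using card_image[OF inj_on_subset[OF abs_inj_Vset]] by (metis (no_types, lifting) mem_Collect_eq subsetI)
  then show ?thesis using c p(1) by simp
qed

lemma posv_in:
  assumes N: "N \<subseteq> {1..n}" and k: "k \<in> N" "k + 1 \<in> N"
  shows "posv n N k = int (card {j \<in> N. j \<ge> k + 1})"
proof -
  have kV: "- (int k + 1) \<in> Vset n N" using k N unfolding Vset_def by (auto simp: nat_add_distrib)
  have p: "1 \<le> posv n N k" "posv n N k \<le> int n" "mu n N (posv n N k) = - (int k + 1)"
    using mu_inv_pos[OF N kV] k(1) unfolding posv_def by auto
  have "card {y \<in> mu n N ` {1..int n}. y \<le> mu n N (posv n N k)} = nat (posv n N k)"
    using pos_card[OF mu_props(2)[OF N] p(1,2)] .
  then have c: "card {y \<in> Vset n N. y \<le> - (int k + 1)} = nat (posv n N k)" using p(3) mu_vals[OF N] by simp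
  have "(\<lambda>y. nat \<bar>y\<bar>) ` {y \<in> Vset n N. y \<le> - (int k + 1)} = {j \<in> N. j \<ge> k + 1}"
  proof
    show "(\<lambda>y. nat \<bar>y\<bar>) ` {y \<in> Vset n N. y \<le> - (int k + 1)} \<subseteq> {j \<in> N. j \<ge> k + 1}"
      unfolding Vset_def by (auto simp: abs_if split: if_splits)
    show "{j \<in> N. j \<ge> k + 1} \<subseteq> (\<lambda>y. nat \<bar>y\<bar>) ` {y \<in> Vset n N. y \<le> - (int k + 1)}"
    proof
      fix j assume j: "j \<in> {j \<in> N. j \<ge> k + 1}"
      then have "- int j \<in> {y \<in> Vset n N. y \<le> - (int k + 1)}" using N unfolding Vset_def by auto
      then show "j \<in> (\<lambda>y. nat \<bar>y\<bar>) ` {y \<in> Vset n N. y \<le> - (int k + 1)}"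
        by (metis (lifting) image_eqI abs_minus_cancel nat_int abs_of_nat)
    qed
  qed
  then have "card {j \<in> N. j \<ge> k + 1} = card {y \<in> Vset n N. y \<le> - (int k + 1)}"
    using card_image[OF inj_on_subset[OF abs_inj_Vset]] by (metis (no_types, lifting) mem_Collect_eq subsetI)
  then show ?thesis using c p(1) by simp
qed


lemma PI_sp: "w \<in> sp n \<Longrightarrow> PI n w \<in> sp n"
  using decomp(1) Sn_sp by blast

lemma des0_iff: "w \<in> sp n \<Longrightarrow> 1 \<le> n \<Longrightarrow> des n 0 w \<longleftrightarrow> 1 \<in> negs n w"
  using step0(3,4)[of w n] unfolding des_def by auto

lemma des_mixed_iff: "w \<in> sp n \<Longrightarrow> 1 \<le> k \<Longrightarrow> k < n \<Longrightarrow> (k \<in> negs n w) \<noteq> (k + 1 \<in> negs n w)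
   \<Longrightarrow> des n k w \<longleftrightarrow> k \<notin> negs n w"
  using step_mixed(3,4)[of w n k] unfolding des_def by auto

lemma des_same_iff:
  assumes "w \<in> sp n" "1 \<le> k" "k < n" "(k \<in> negs n w) = (k + 1 \<in> negs n w)"
  shows "des n k w \<longleftrightarrow> posv n (negs n w) k \<in> Des_inv n (PI n w)"
proof -
  have i: "1 \<le> nat (posv n (negs n w) k)" "nat (posv n (negs n w) k) < n"
    using step_same(1,2)[OF assms] by auto
  have e: "int (nat (posv n (negs n w) k)) = posv n (negs n w) k" using i by simp
  show ?thesis using step_same(5,6)[OF assms] Des_iff[OF PI_sp[OF assms(1)] i] e unfolding des_def
    by (auto split: if_splits)
qed

lemma card_le_v: "N \<subseteq> {1..v} \<Longrightarrow> card N \<le> v"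
  using card_mono[of "{1..v}" N] by simp

lemma same_in_nodes:
  assumes C: "Cp n N \<pi>" and N: "N \<subseteq> {1..n}" and k: "k \<in> N" "k + 1 \<in> N"
  shows "posv n N k \<notin> Des_inv n \<pi>"
proof
  assume iD: "posv n N k \<in> Des_inv n \<pi>"
  have fN: "finite N" using finite_subset[OF N] by simp
  have c2: "card N \<ge> 2"
  proof -
    have "{k, k+1} \<subseteq> N" using k by auto
    then have "card {k, k+1} \<le> card N" using card_mono fN by blast
    then show ?thesis by simp
  qed
  then have n1: "1 \<notin> Des_inv n \<pi>" using C unfolding Cp_def by auto
  have pv: "posv n N k = int (card {j \<in> N. j \<ge> k + 1})" using posv_in[OF N k] .
  have "k \<notin> {j \<in> N. j \<ge> k + 1}" by simp
  then have "{j \<in> N. j \<ge> k + 1} \<subset> N" using k(1) by blast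
  then have "card {j \<in> N. j \<ge> k + 1} < card N" using psubset_card_mono[OF fN] by blast
  moreover have "posv n N k \<noteq> 1" using iD n1 by auto
  then have "int (first_valley n \<pi>) \<le> posv n N k" using fv_lower[OF iD] by simp
  moreover have "card N \<le> first_valley n \<pi>" using C card_le_v unfolding Cp_def by blast
  ultimately show False using pv by linarith
qed

lemma same_out_desc:
  assumes C: "Cp n N \<pi>" and N: "N \<subseteq> {1..n}" and k: "1 \<le> k" "k < n" "k \<notin> N" "k + 1 \<notin> N"
    and iD: "posv n N k \<in> Des_inv n \<pi>"
  shows "\<forall>j\<in>N. j < k" "posv n N k = int k"
proof -
  have fN: "finite N" using finite_subset[OF N] by simp
  have pv: "posv n N k = int (card (N \<union> {1..k}))" using posv_out[OF N k(1) _ k(3)] k(2) by simp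
  show a: "\<forall>j\<in>N. j < k"
  proof (rule ccontr)
    assume "\<not> (\<forall>j\<in>N. j < k)"
    then have ne: "N \<noteq> {}" by auto
    define M where "M = Max N"
    have MN: "M \<in> N" unfolding M_def using Max_in[OF fN ne] .
    have Mge: "\<forall>j\<in>N. j \<le> M" unfolding M_def using Max_ge[OF fN] by auto
    have kM: "k < M" using \<open>\<not> (\<forall>j\<in>N. j < k)\<close> Mge k(3) by (metis le_neq_implies_less linorder_not_less order_trans)
    have k1M: "k + 1 < M" using kM MN k(4) by (metis Suc_eq_plus1 Suc_lessI)
    have sub: "N \<union> {1..k} \<subseteq> {1..M} - {k+1}" using Mge N k(4) kM by auto
    have "card (N \<union> {1..k}) \<le> card ({1..M} - {k+1})" using card_mono[OF _ sub] by simp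
    then have c1: "card (N \<union> {1..k}) \<le> M - 1" using k1M by simp
    have "{k, M} \<subseteq> N \<union> {1..k}" using MN k by auto
    then have "card {k, M} \<le> card (N \<union> {1..k})" using card_mono fN by (metis finite_UnI finite_atLeastAtMost)
    then have c2: "card (N \<union> {1..k}) \<ge> 2" using kM by simp
    have "posv n N k \<noteq> 1" using pv c2 by simp
    then have "int (first_valley n \<pi>) \<le> posv n N k" using fv_lower[OF iD] by simp
    moreover have "M \<le> first_valley n \<pi>" using C MN unfolding Cp_def by auto
    ultimately show False using pv c1 kM by linarith
  qed
  then have "N \<subseteq> {1..k}" using N by (meson atLeastAtMost_iff less_imp_le subset_iff)
  then have "N \<union> {1..k} = {1..k}" by blast
  then show "posv n N k = int k" using pv by simp
qed

lemma Cp_0: "Cp n N \<pi> \<Longrightarrow> Cp n (N - {1}) \<pi>"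
proof -
  assume C: "Cp n N \<pi>"
  have "card (N - {1}) \<le> card N" by (metis card_Diff1_le card.infinite diff_le_self empty_iff finite_Diff2)
  then show ?thesis using C unfolding Cp_def by auto
qed

lemma card_swap: "finite N \<Longrightarrow> k \<notin> N \<Longrightarrow> j \<in> N \<Longrightarrow> card (insert k (N - {j})) = card N"
  by (simp add: card_insert_if card_Diff_singleton) (metis One_nat_def Suc_pred card_gt_0_iff empty_iff)

lemma Cp_mixed: "Cp n N \<pi> \<Longrightarrow> N \<subseteq> {1..n} \<Longrightarrow> 1 \<le> k \<Longrightarrow> k \<notin> N \<Longrightarrow> k + 1 \<in> N \<Longrightarrow> Cp n (insert k (N - {k+1})) \<pi>"
proof -
  assume C: "Cp n N \<pi>" and N: "N \<subseteq> {1..n}" and k: "1 \<le> k" "k \<notin> N" "k + 1 \<in> N"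
  have fN: "finite N" using finite_subset[OF N] by simp
  have "card (insert k (N - {k+1})) = card N" using card_swap[OF fN k(2,3)] .
  moreover have "insert k (N - {k+1}) \<subseteq> {1..first_valley n \<pi>}" using C k unfolding Cp_def by auto
  ultimately show ?thesis using C unfolding Cp_def by auto
qed

lemma Cp_same:
  assumes C: "Cp n N \<pi>" and N: "N \<subseteq> {1..n}" and ps: "\<pi> \<in> sp n"
    and k: "1 \<le> k" "k < n" "(k \<in> N) = (k + 1 \<in> N)" and iD: "posv n N k \<in> Des_inv n \<pi>"
  shows "Cp n N (gen (nat (posv n N k)) \<circ> \<pi>)"
proof -
  have out: "k \<notin> N" "k + 1 \<notin> N" using same_in_nodes[OF C N] iD k(3) by auto
  have below: "\<forall>j\<in>N. j < k" and pk: "posv n N k = int k" using same_out_desc[OF C N k(1,2) out iD] by auto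
  have nk: "nat (posv n N k) = k" using pk by simp
  have kD: "int k \<in> Des_inv n \<pi>" using iD pk by simp
  have d: "inv \<pi> (int k) > inv \<pi> (int k + 1)" using Des_iff[OF ps k(1,2)] kD by simp
  have av: "avoid321 n (inv (gen k \<circ> \<pi>))" unfolding inv_gen_comp[OF ps]
    using avoid_swap[OF k(1,2) _ d] C unfolding Cp_def by simp
  have sub: "N \<subseteq> {1..first_valley n (gen k \<circ> \<pi>)}"
  proof
    fix j assume jN: "j \<in> N"
    have "j \<le> first_valley n (gen k \<circ> \<pi>)"
    proof (rule fv_geI)
      show "j \<le> n" using jN N by auto
      fix d assume dD: "d \<in> Des_inv n (gen k \<circ> \<pi>)" "d \<noteq> 1"
      show "int j \<le> d"
      proof (cases "d = int k - 1 \<or> d = int k \<or> d = int k + 1")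
        case True
        have "d \<noteq> int k" using Des_swap_self[OF ps k(1,2) d] dD by auto
        then show ?thesis using True below jN by auto
      next
        case False
        then have "d \<in> Des_inv n \<pi>" using Des_swap[OF ps k(1,2) dD(1)] by auto
        then have "int (first_valley n \<pi>) \<le> d" using fv_lower dD(2) by blast
        moreover have "j \<le> first_valley n \<pi>" using C jN unfolding Cp_def by auto
        ultimately show ?thesis by linarith
      qed
    qed
    then show "j \<in> {1..first_valley n (gen k \<circ> \<pi>)}" using jN N by auto
  qed
  have c: "1 \<in> Des_inv n (gen k \<circ> \<pi>) \<longrightarrow> card N \<le> 1"
  proof
    assume h: "1 \<in> Des_inv n (gen k \<circ> \<pi>)"
    show "card N \<le> 1"
    proof (cases "(1::int) = int k - 1 \<or> (1::int) = int k \<or> (1::int) = int k + 1")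
      case True
      have "(1::int) \<noteq> int k" using Des_swap_self[OF ps k(1,2) d] h by auto
      then have "k = 2" using True k(1) by auto
      have "N \<subseteq> {1}"
      proof
        fix j assume jN: "j \<in> N"
        have "1 \<le> j" using subsetD[OF N jN] by simp
        moreover have "j < 2" using below jN \<open>k = 2\<close> by auto
        ultimately show "j \<in> {1}" by simp
      qed
      then show ?thesis using card_mono[of "{1}" N] by simp
    next
      case False
      then have "1 \<in> Des_inv n \<pi>" using Des_swap[OF ps k(1,2) h] by auto
      then show ?thesis using C unfolding Cp_def by auto
    qed
  qed
  show ?thesis using av sub c nk unfolding Cp_def by simp
qed


lemma R1:
  assumes w: "w \<in> sp n" and C: "CC n w" and a: "a < n" and d: "des n a w"
  shows "CC n (gen a \<circ> w)"
proof -
  define N where "N = negs n w"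
  have N: "N \<subseteq> {1..n}" unfolding N_def by (rule negs_sub)
  have Cw: "Cp n N (PI n w)" using C unfolding CC_def N_def .
  show ?thesis
  proof (cases "a = 0")
    case True
    have n1: "1 \<le> n" using a True by simp
    have "1 \<in> N" using des0_iff[OF w n1] d True unfolding N_def by simp
    then show ?thesis using step0(1,2)[OF w n1] Cp_0[OF Cw] True unfolding CC_def N_def by simp
  next
    case False
    then have k: "1 \<le> a" by simp
    show ?thesis
    proof (cases "(a \<in> N) = (a + 1 \<in> N)")
      case True
      have iD: "posv n N a \<in> Des_inv n (PI n w)" using des_same_iff[OF w k a] True d unfolding N_def by simp
      show ?thesis using step_same(3,4)[OF w k a] True Cp_same[OF Cw N PI_sp[OF w] k a True iD]
        unfolding CC_def N_def by simp
    next
      case False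
      then have "a \<notin> N" "a + 1 \<in> N" using des_mixed_iff[OF w k a] d unfolding N_def by auto
      then show ?thesis using step_mixed(1,2)[OF w k a] Cp_mixed[OF Cw N k] unfolding CC_def N_def by simp
    qed
  qed
qed

lemma not_des_in:
  assumes w: "w \<in> sp n" and C: "CC n w" and k: "1 \<le> k" "k < n" and kN: "k + 1 \<in> negs n w"
  shows "\<not> des n k w \<or> k \<notin> negs n w"
proof -
  have Cw: "Cp n (negs n w) (PI n w)" using C unfolding CC_def .
  show ?thesis
  proof (cases "k \<in> negs n w")
    case True
    then have "posv n (negs n w) k \<notin> Des_inv n (PI n w)" using same_in_nodes[OF Cw negs_sub True kN] by simp
    then show ?thesis using des_same_iff[OF w k] True kN by simp
  next
    case False then show ?thesis by simp
  qed
qed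

lemma des_cases:
  assumes w: "w \<in> sp n" and C: "CC n w" and k: "1 \<le> k" "k < n" and d: "des n k w"
  shows "(k \<notin> negs n w \<and> k + 1 \<in> negs n w) \<or>
         (k \<notin> negs n w \<and> k + 1 \<notin> negs n w \<and> (\<forall>j\<in>negs n w. j < k) \<and> int k \<in> Des_inv n (PI n w))"
proof -
  have Cw: "Cp n (negs n w) (PI n w)" using C unfolding CC_def .
  show ?thesis
  proof (cases "(k \<in> negs n w) = (k + 1 \<in> negs n w)")
    case True
    have iD: "posv n (negs n w) k \<in> Des_inv n (PI n w)" using des_same_iff[OF w k True] d by simp
    have out: "k \<notin> negs n w" "k + 1 \<notin> negs n w" using same_in_nodes[OF Cw negs_sub] iD True by auto
    show ?thesis using same_out_desc[OF Cw negs_sub k out iD] out iD by auto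
  next
    case False
    then show ?thesis using des_mixed_iff[OF w k False] d by auto
  qed
qed

lemma R2:
  assumes w: "w \<in> sp n" and C: "CC n w" and a: "a + 1 < n" and d: "des n a w" "des n (a+1) w"
  shows False
proof (cases "a = 0")
  case True
  have n1: "1 \<le> n" using a by simp
  have "1 \<in> negs n w" using des0_iff[OF w n1] d(1) True by simp
  moreover have k: "1 \<le> (1::nat)" "1 < n" using a True by auto
  ultimately show False
  proof (cases "2 \<in> negs n w")
    case True
    then show False using not_des_in[OF w C k] \<open>1 \<in> negs n w\<close> d(2) \<open>a = 0\<close> by (simp add: numeral_2_eq_2)
  next
    case False
    then show False using des_mixed_iff[OF w k] \<open>1 \<in> negs n w\<close> d(2) \<open>a = 0\<close> by (simp add: numeral_2_eq_2)
  qed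
next
  case False
  then have k: "1 \<le> a" "a < n" using a by auto
  have k1: "1 \<le> a + 1" "a + 1 < n" using a by auto
  have Cw: "Cp n (negs n w) (PI n w)" using C unfolding CC_def .
  from des_cases[OF w C k d(1)] show False
  proof
    assume h: "a \<notin> negs n w \<and> a + 1 \<in> negs n w"
    from des_cases[OF w C k1 d(2)] show False using h by auto
  next
    assume h: "a \<notin> negs n w \<and> a + 1 \<notin> negs n w \<and> (\<forall>j\<in>negs n w. j < a) \<and> int a \<in> Des_inv n (PI n w)"
    from des_cases[OF w C k1 d(2)] have h2: "int (a + 1) \<in> Des_inv n (PI n w)" using h by auto
    have p: "PI n w \<in> sp n" using PI_sp[OF w] .
    have "inv (PI n w) (int a) > inv (PI n w) (int a + 1)" using Des_iff[OF p k] h by simp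
    moreover have "inv (PI n w) (int a + 1) > inv (PI n w) (int a + 2)" using Des_iff[OF p k1] h2 by (simp add: add.commute)
    moreover have "avoid321 n (inv (PI n w))" using Cw unfolding Cp_def by simp
    moreover have "1 \<le> int a" "int a + 2 \<le> int n" using k a by auto
    ultimately show False unfolding avoid321_def
      apply (elim notE)
      apply (rule exI[of _ "int a"], rule exI[of _ "int a + 1"], rule exI[of _ "int a + 2"])
      by simp
  qed
qed


lemma R3_empty:
  assumes w: "w \<in> sp n" and N0: "negs n w = {}"
    and H1: "\<And>a. a < n \<Longrightarrow> des n a w \<Longrightarrow> CC n (gen a \<circ> w)"
    and H2: "\<And>a. a + 1 < n \<Longrightarrow> des n a w \<Longrightarrow> des n (a+1) w \<Longrightarrow> False"
  shows "CC n w"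
proof -
  define p where "p = inv (PI n w)"
  have ps: "PI n w \<in> sp n" using PI_sp[OF w] .
  have pv: "posv n (negs n w) k = int k" if "1 \<le> k" "k \<le> n" for k
    using posv_out[of "{}" n k] that N0 by simp
  have st: "(k \<in> negs n w) = (k + 1 \<in> negs n w)" for k using N0 by simp
  have desk: "des n k w \<longleftrightarrow> p (int k) > p (int k + 1)" if "1 \<le> k" "k < n" for k
    using des_same_iff[OF w that st] pv[of k] that Des_iff[OF ps that] unfolding p_def by simp
  have avk: "avoid321 n (p \<circ> gen k)" if "1 \<le> k" "k < n" "des n k w" for k
  proof -
    have "CC n (gen k \<circ> w)" using H1 that by simp
    moreover have "negs n (gen k \<circ> w) = negs n w" "PI n (gen k \<circ> w) = gen k \<circ> PI n w"
      using step_same(3,4)[OF w that(1,2) st] pv[of k] that by auto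
    ultimately show ?thesis unfolding CC_def Cp_def p_def using inv_gen_comp[OF ps] by simp
  qed
  have "avoid321 n p"
  proof (rule ccontr)
    assume "\<not> avoid321 n p"
    then obtain a b c where abc: "1 \<le> a" "a < b" "b < c" "c \<le> int n" "p a > p b" "p b > p c"
      unfolding avoid321_def by blast
    obtain i where i: "a \<le> i" "i < b" "p i > p (i + 1)" using desc_between[of a b n p] abc by auto
    define k where "k = nat i"
    have k: "1 \<le> k" "k < n" "int k = i" using i abc unfolding k_def by auto
    have dk: "des n k w" using desk[OF k(1,2)] k i by simp
    have "(a, b) = (int k, int k + 1)"
    proof (rule ccontr)
      assume "(a, b) \<noteq> (int k, int k + 1)"
      moreover have "(b, c) \<noteq> (int k, int k + 1)" using k i by auto
      ultimately show False using pat_transfer[OF k(1,2) abc] avk[OF k(1,2) dk] by blast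
    qed
    then have ab: "a = int k" "b = int k + 1" by auto
    obtain i' where i': "b \<le> i'" "i' < c" "p i' > p (i' + 1)" using desc_between[of b c n p] abc by auto
    define k' where "k' = nat i'"
    have k': "1 \<le> k'" "k' < n" "int k' = i'" using i' abc unfolding k'_def by auto
    have dk': "des n k' w" using desk[OF k'(1,2)] k' i' by simp
    have "(b, c) = (int k', int k' + 1)"
    proof (rule ccontr)
      assume "(b, c) \<noteq> (int k', int k' + 1)"
      moreover have "(a, b) \<noteq> (int k', int k' + 1)" using k' i' abc by auto
      ultimately show False using pat_transfer[OF k'(1,2) abc] avk[OF k'(1,2) dk'] by blast
    qed
    then have "k' = k + 1" using ab by auto
    then show False using H2[of k] dk dk' k' by simp
  qed
  then show ?thesis unfolding CC_def Cp_def p_def using N0 by simp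
qed

lemma R3_one:
  assumes w: "w \<in> sp n" and N1: "1 \<in> negs n w"
    and H1: "\<And>a. a < n \<Longrightarrow> des n a w \<Longrightarrow> CC n (gen a \<circ> w)"
    and H2: "\<And>a. a + 1 < n \<Longrightarrow> des n a w \<Longrightarrow> des n (a+1) w \<Longrightarrow> False"
  shows "CC n w"
proof -
  define N where "N = negs n w"
  have N: "N \<subseteq> {1..n}" unfolding N_def by (rule negs_sub)
  have fN: "finite N" using finite_subset[OF N] by simp
  have n1: "1 \<le> n" using N1 negs_sub[of n w] by auto
  have d0: "des n 0 w" using des0_iff[OF w n1] N1 by simp
  have C0: "Cp n (N - {1}) (PI n w)" using H1[OF _ d0] n1 step0(1,2)[OF w n1] N1 unfolding CC_def N_def by simp
  have av: "avoid321 n (inv (PI n w))" using C0 unfolding Cp_def by simp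
  have sub: "N \<subseteq> {1..first_valley n (PI n w)}" using C0 fv_ge1[OF n1, of "PI n w"] unfolding Cp_def by auto
  have cd: "card N \<le> 1" if D1: "1 \<in> Des_inv n (PI n w)"
  proof (rule ccontr)
    assume "\<not> card N \<le> 1"
    have c1: "card (N - {1}) \<le> 1" using C0 D1 unfolding Cp_def by simp
    have "N - {1} \<noteq> {}"
    proof
      assume "N - {1} = {}"
      then have "N \<subseteq> {1}" by auto
      then show False using \<open>\<not> card N \<le> 1\<close> card_mono[of "{1}" N] by simp
    qed
    then obtain j where j: "j \<in> N - {1}" by auto
    have Nj: "N - {1} = {j}"
    proof -
      have "card (N - {1}) = 1" using c1 \<open>N - {1} \<noteq> {}\<close> fN by (metis card_0_eq finite_Diff le_antisym not_one_le_zero le_eq_less_or_eq less_one)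
      then show ?thesis using j by (metis card_1_singletonE singletonD)
    qed
    have NN: "N = {1, j}" using Nj N1 unfolding N_def by auto
    have j2: "j \<ge> 2" using j N by force
    show False
    proof (cases "j = 2")
      case True
      have k: "1 \<le> (1::nat)" "1 < n" using j N True by auto
      have "{i \<in> N. i \<ge> 1 + 1} = {2}" using NN True by auto
      then have "posv n N 1 = 1" using posv_in[OF N, of 1] NN True by simp
      then have "des n 1 w" using des_same_iff[OF w k] NN True D1 unfolding N_def by simp
      then show False using H2[of 0] d0 k by simp
    next
      case False
      define k where "k = j - 1"
      have k: "1 \<le> k" "k < n" "k \<notin> N" "k + 1 \<in> N" using j2 False NN N unfolding k_def by auto
      have dk: "des n k w" using des_mixed_iff[OF w k(1,2)] k unfolding N_def by simp
      have "Cp n (insert k (N - {k+1})) (PI n w)"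
        using H1[OF k(2) dk] step_mixed(1,2)[OF w k(1,2)] k unfolding CC_def N_def by simp
      moreover have "insert k (N - {k+1}) = {1, k}" using NN k j2 False unfolding k_def by auto
      moreover have "card {1, k} = 2" using j2 False unfolding k_def by simp
      ultimately show False using D1 unfolding Cp_def by simp
    qed
  qed
  show ?thesis unfolding CC_def Cp_def using av sub cd unfolding N_def by simp
qed

lemma R3_other:
  assumes w: "w \<in> sp n" and Nne: "negs n w \<noteq> {}" and N1: "1 \<notin> negs n w"
    and H1: "\<And>a. a < n \<Longrightarrow> des n a w \<Longrightarrow> CC n (gen a \<circ> w)"
    and H2: "\<And>a. a + 1 < n \<Longrightarrow> des n a w \<Longrightarrow> des n (a+1) w \<Longrightarrow> False"
  shows "CC n w"
proof -
  define N where "N = negs n w"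
  have N: "N \<subseteq> {1..n}" unfolding N_def by (rule negs_sub)
  have fN: "finite N" using finite_subset[OF N] by simp
  define j0 where "j0 = Min N"
  have j0N: "j0 \<in> N" unfolding j0_def using Min_in[OF fN] Nne unfolding N_def by simp
  have j0min: "\<forall>j\<in>N. j0 \<le> j" unfolding j0_def using Min_le[OF fN] by simp
  have j02: "j0 \<ge> 2"
  proof -
    have "1 \<le> j0" using subsetD[OF N j0N] by simp
    moreover have "j0 \<noteq> 1" using j0N N1 unfolding N_def by auto
    ultimately show ?thesis by simp
  qed
  define k where "k = j0 - 1"
  have j0n: "j0 \<le> n" using subsetD[OF N j0N] by simp
  have k: "1 \<le> k" "k < n" "k + 1 \<in> N" "k + 1 = j0"
    using j02 j0N j0n unfolding k_def by auto
  have "k \<notin> N"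
  proof
    assume "k \<in> N" then have "j0 \<le> k" using j0min by auto
    then show False using k by simp
  qed
  then have k: "1 \<le> k" "k < n" "k \<notin> N" "k + 1 \<in> N" "k + 1 = j0" using k by auto
  have dk: "des n k w" using des_mixed_iff[OF w k(1,2)] k unfolding N_def by simp
  have C1: "Cp n (insert k (N - {k+1})) (PI n w)"
    using H1[OF k(2) dk] step_mixed(1,2)[OF w k(1,2)] k unfolding CC_def N_def by simp
  have av: "avoid321 n (inv (PI n w))" using C1 unfolding Cp_def by simp
  have cd: "card (insert k (N - {k+1})) = card N" using card_swap[OF fN k(3,4)] .
  have sub: "N \<subseteq> {1..first_valley n (PI n w)}"
  proof
    fix j assume jN: "j \<in> N"
    have j1: "1 \<le> j" using subsetD[OF N jN] by simp
    show "j \<in> {1..first_valley n (PI n w)}"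
    proof (cases "j = j0")
      case False
      then have "j \<in> insert k (N - {k+1})" using jN k by auto
      then show ?thesis using C1 unfolding Cp_def by auto
    next
      case True
      show ?thesis
      proof (cases "\<exists>j'\<in>N. j' \<noteq> j0")
        case True
        then obtain j' where j': "j' \<in> N" "j' \<noteq> j0" by auto
        then have "j' \<in> insert k (N - {k+1})" using k by auto
        then have "j' \<le> first_valley n (PI n w)" using C1 unfolding Cp_def by auto
        moreover have "j0 \<le> j'" using j0min j' by auto
        ultimately show ?thesis using \<open>j = j0\<close> j1 by auto
      next
        case False
        then have NN: "N = {j0}" using j0N by blast
        have kv: "k \<le> first_valley n (PI n w)" using C1 unfolding Cp_def by auto
        show ?thesis
        proof (rule ccontr)
          assume "j \<notin> {1..first_valley n (PI n w)}"
          then have v: "first_valley n (PI n w) = k" using kv \<open>j = j0\<close> k(5) j1 by auto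
          then have vl: "first_valley n (PI n w) < n" using k by simp
          have vD: "int k \<in> Des_inv n (PI n w)" "k \<ge> 2" using fv_mem[OF vl] v by auto
          define k' where "k' = k - 1"
          have k': "1 \<le> k'" "k' + 1 < n" "k' \<notin> N" "k' + 1 \<notin> N" "k' + 1 = k"
            using vD k NN unfolding k'_def by auto
          have "posv n N k' = int (card (N \<union> {1..k'}))" using posv_out[OF N k'(1) _ k'(3)] k' by simp
          moreover have "N \<union> {1..k'} = insert j0 {1..k'}" using NN by auto
          moreover have "j0 \<notin> {1..k'}" using k' k by auto
          ultimately have "posv n N k' = int k" using k' by simp
          then have "des n k' w" using des_same_iff[OF w k'(1)] k' vD unfolding N_def by simp
          then show False using H2[of k'] dk k' by simp
        qed
      qed
    qed
  qed
  show ?thesis unfolding CC_def Cp_def using av sub cd C1 unfolding Cp_def N_def by simp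
qed


lemma inv_w_decomp:
  assumes w: "w \<in> sp n"
  shows "inv w = inv (PI n w) \<circ> inv (mu n (negs n w))"
proof -
  have m: "mu n (negs n w) \<in> sp n" using mu_props(1)[OF negs_sub] .
  have "inv (mu n (negs n w) \<circ> PI n w) = inv (PI n w) \<circ> inv (mu n (negs n w))"
    using o_inv_distrib[OF spD(1)[OF m] spD(1)[OF PI_sp[OF w]]] .
  then show ?thesis using decomp(2)[OF w] by simp
qed

lemma inv_w_sign:
  assumes w: "w \<in> sp n" and j: "1 \<le> j" "j \<le> n"
  shows "inv w (int j) > 0 \<longleftrightarrow> j \<notin> negs n w"
proof -
  define N where "N = negs n w"
  have N: "N \<subseteq> {1..n}" unfolding N_def by (rule negs_sub)
  define m where "m = mu n N"
  have ms: "m \<in> sp n" unfolding m_def using mu_props(1)[OF N] .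
  define p where "p = inv (PI n w)"
  have pS: "p \<in> Sn n" unfolding p_def using Sn_inv[OF decomp(1)[OF w]] .
  have iw: "inv w = p \<circ> inv m" unfolding p_def m_def N_def using inv_w_decomp[OF w] .
  show ?thesis
  proof (cases "j \<in> N")
    case False
    then have "int j \<in> Vset n N" using j unfolding Vset_def by auto
    then have "1 \<le> inv m (int j)" "inv m (int j) \<le> int n" using mu_inv_pos[OF N] unfolding m_def by auto
    then have "p (inv m (int j)) > 0" using Sn_range[OF pS] by force
    then show ?thesis using False iw unfolding N_def by simp
  next
    case True
    then have "- int j \<in> Vset n N" using j unfolding Vset_def by auto
    then have x: "1 \<le> inv m (- int j)" "inv m (- int j) \<le> int n" using mu_inv_pos[OF N] unfolding m_def by auto
    have "inv m (int j) = - inv m (- int j)" using spD(2)[OF sp_inv[OF ms], of "- int j"] by simp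
    moreover have "p (- inv m (- int j)) = - p (inv m (- int j))" using spD(2)[OF Sn_sp[OF pS]] by simp
    moreover have "p (inv m (- int j)) > 0" using Sn_range[OF pS] x by force
    ultimately show ?thesis using True iw unfolding N_def by simp
  qed
qed

lemma des_char:
  assumes w: "w \<in> sp n" and b: "b < n"
  shows "des n b w \<longleftrightarrow> (if b = 0 then inv w 1 < 0 else inv w (int b) > inv w (int b + 1))"
proof (cases "b = 0")
  case True
  have n1: "1 \<le> n" using b by simp
  have "inv w 1 > 0 \<longleftrightarrow> 1 \<notin> negs n w" using inv_w_sign[OF w _ n1] by simp
  moreover have "inv w 1 \<noteq> 0" using sp_inv[OF w] sp_range[of "inv w" n 1] n1 by auto
  ultimately show ?thesis using des0_iff[OF w n1] True by auto
next
  case False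
  then have k: "1 \<le> b" "b < n" using b by auto
  define N where "N = negs n w"
  have N: "N \<subseteq> {1..n}" unfolding N_def by (rule negs_sub)
  have sk: "inv w (int b) > 0 \<longleftrightarrow> b \<notin> N" using inv_w_sign[OF w k(1)] k unfolding N_def by simp
  have sk1: "inv w (int b + 1) > 0 \<longleftrightarrow> b + 1 \<notin> N" using inv_w_sign[OF w, of "b+1"] k unfolding N_def by (simp add: add.commute)
  have nz: "inv w (int b) \<noteq> 0" "inv w (int b + 1) \<noteq> 0"
    using sp_inv[OF w] sp_range[of "inv w" n "int b"] sp_range[of "inv w" n "int b + 1"] k by auto
  show ?thesis
  proof (cases "(b \<in> N) = (b + 1 \<in> N)")
    case F: False
    show ?thesis using des_mixed_iff[OF w k] F sk sk1 nz False unfolding N_def by auto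
  next
    case True
    define m where "m = mu n N"
    have ms: "m \<in> sp n" unfolding m_def using mu_props(1)[OF N] .
    define p where "p = inv (PI n w)"
    have pS: "p \<in> Sn n" unfolding p_def using Sn_inv[OF decomp(1)[OF w]] .
    have iw: "inv w = p \<circ> inv m" unfolding p_def m_def N_def using inv_w_decomp[OF w] .
    define i where "i = posv n N b"
    have i: "1 \<le> i" "i < int n" using genk_mu_same(1,2)[OF N k True] unfolding i_def by auto
    have mi: "m i = (if b \<in> N then - (int b + 1) else int b)" "m (i + 1) = (if b \<in> N then - int b else int b + 1)"
      using genk_mu_same(3,4)[OF N k True] unfolding i_def m_def by auto
    have im: "inv m (m x) = x" for x using sp_inv_app(2)[OF ms] .
    have dd: "des n b w \<longleftrightarrow> p i > p (i + 1)"
    proof -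
      have "des n b w \<longleftrightarrow> i \<in> Des_inv n (PI n w)" using des_same_iff[OF w k] True unfolding i_def N_def by simp
      also have "\<dots> \<longleftrightarrow> p i > p (i + 1)" unfolding Des_inv_def p_def using i by auto
      finally show ?thesis .
    qed
    have podd: "p (- x) = - p x" for x using spD(2)[OF Sn_sp[OF pS]] .
    show ?thesis
    proof (cases "b \<in> N")
      case bN: True
      have "inv m (- (int b + 1)) = i" "inv m (- int b) = i + 1" using mi im bN by metis+
      then have "inv m (int b + 1) = - i" "inv m (int b) = - (i + 1)"
        using spD(2)[OF sp_inv[OF ms], of "int b + 1"] spD(2)[OF sp_inv[OF ms], of "int b"] by auto
      moreover have "p (- (i + 1)) = - p (i + 1)" "p (- i) = - p i" using podd[of "i + 1"] podd[of i] by (simp_all only:)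
      ultimately have "inv w (int b) = - p (i + 1)" "inv w (int b + 1) = - p i" using iw by auto
      then show ?thesis using dd False by auto
    next
      case bN: False
      have "inv m (int b) = i" "inv m (int b + 1) = i + 1" using mi im bN by metis+
      then have "inv w (int b) = p i" "inv w (int b + 1) = p (i + 1)" using iw by auto
      then show ?thesis using dd False by auto
    qed
  qed
qed

lemma des_comm:
  assumes w: "w \<in> sp n" and ab: "a < n" "b < n" "a \<noteq> b" "a + 1 \<noteq> b" "b + 1 \<noteq> a" and d: "des n b w"
  shows "des n b (gen a \<circ> w)"
proof -
  have w': "gen a \<circ> w \<in> sp n" using sp_comp[OF gen_sp[OF ab(1)] w] .
  have iv: "inv (gen a \<circ> w) = inv w \<circ> gen a" using o_inv_distrib[OF gen_bij spD(1)[OF w]] gen_inv by simp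
  show ?thesis
  proof (cases "b = 0")
    case True
    then have "gen a 1 = 1" using ab by (cases "a = 0") (auto simp: genk)
    then show ?thesis using des_char[OF w ab(2)] des_char[OF w' ab(2)] d iv True by simp
  next
    case False
    have "gen a (int b) = int b" "gen a (int b + 1) = int b + 1" using ab False
      by (cases "a = 0"; auto simp: gen0 genk)+
    then show ?thesis using des_char[OF w ab(2)] des_char[OF w' ab(2)] d iv False by simp
  qed
qed

lemma comm_step_Cons: "(u, v) \<in> comm_step \<Longrightarrow> (a # u, a # v) \<in> comm_step"
proof -
  assume "(u, v) \<in> comm_step"
  then obtain xs x y ys where "u = xs @ [x, y] @ ys" "v = xs @ [y, x] @ ys" "gen x \<circ> gen y = gen y \<circ> gen x"
    unfolding comm_step_def by blast
  then show ?thesis unfolding comm_step_def by (auto intro!: exI[of _ "a # xs"])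
qed

lemma comm_Cons: "(u, v) \<in> comm_step\<^sup>* \<Longrightarrow> (a # u, a # v) \<in> comm_step\<^sup>*"
proof (induction rule: rtrancl_induct)
  case base then show ?case by simp
next
  case (step y z)
  then show ?case using comm_step_Cons by (meson rtrancl.rtrancl_into_rtrancl)
qed

lemma comm_step_sym: "(u, v) \<in> comm_step \<Longrightarrow> (v, u) \<in> comm_step"
  unfolding comm_step_def by fastforce

lemma comm_sym: "(u, v) \<in> comm_step\<^sup>* \<Longrightarrow> (v, u) \<in> comm_step\<^sup>*"
proof (induction rule: rtrancl_induct)
  case base then show ?case by simp
next
  case (step y z)
  then show ?case using comm_step_sym by (meson converse_rtrancl_into_rtrancl)
qed

lemma comm_swap: "gen a \<circ> gen b = gen b \<circ> gen a \<Longrightarrow> (a # b # t, b # a # t) \<in> comm_step\<^sup>*"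
  unfolding comm_step_def by (intro r_into_rtrancl) (auto intro!: exI[of _ "[]"])

definition prj :: "nat \<Rightarrow> nat \<Rightarrow> nat list \<Rightarrow> nat list" where
  "prj a b xs = filter (\<lambda>x. x = a \<or> x = b) xs"

lemma prj_step:
  assumes "(u, v) \<in> comm_step" "gen a \<circ> gen b \<noteq> gen b \<circ> gen a"
  shows "prj a b u = prj a b v"
proof -
  obtain xs x y ys where h: "u = xs @ [x, y] @ ys" "v = xs @ [y, x] @ ys" "gen x \<circ> gen y = gen y \<circ> gen x"
    using assms(1) unfolding comm_step_def by blast
  have "filter (\<lambda>z. z = a \<or> z = b) [x, y] = filter (\<lambda>z. z = a \<or> z = b) [y, x]"
  proof (cases "x = y")
    case True then show ?thesis by simp
  next
    case False
    have "\<not> ((x = a \<or> x = b) \<and> (y = a \<or> y = b))"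
    proof
      assume "(x = a \<or> x = b) \<and> (y = a \<or> y = b)"
      then have "(x = a \<and> y = b) \<or> (x = b \<and> y = a)" using False by auto
      then show False using h(3) assms(2) by auto
    qed
    then show ?thesis by (cases "x = a \<or> x = b"; cases "y = a \<or> y = b") auto
  qed
  then show ?thesis unfolding prj_def h by (simp only: filter_append)
qed

lemma prj_rtrancl:
  assumes "(u, v) \<in> comm_step\<^sup>*" "gen a \<circ> gen b \<noteq> gen b \<circ> gen a"
  shows "prj a b u = prj a b v"
  using assms(1)
proof (induction rule: rtrancl_induct)
  case base then show ?case by simp
next
  case (step y z)
  then show ?case using prj_step[OF _ assms(2)] by simp
qed

lemma CC_id: "CC n id"
proof -
  have "negs n id = {}" unfolding negs_def by auto
  moreover have "PI n id = id" using Sn_decomp[OF Sn_id] by simp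
  moreover have "avoid321 n id" unfolding avoid321_def by auto
  ultimately show ?thesis unfolding CC_def Cp_def by (simp add: inv_id)
qed

lemma R3:
  assumes w: "w \<in> sp n"
    and H1: "\<And>a. a < n \<Longrightarrow> des n a w \<Longrightarrow> CC n (gen a \<circ> w)"
    and H2: "\<And>a. a + 1 < n \<Longrightarrow> des n a w \<Longrightarrow> des n (a+1) w \<Longrightarrow> False"
  shows "CC n w"
proof (cases "negs n w = {}")
  case True show ?thesis
    apply (rule R3_empty[OF w True])
     apply (rule H1, assumption+)
    apply (rule H2, assumption+)
    done
next
  case False
  show ?thesis
  proof (cases "1 \<in> negs n w")
    case True show ?thesis
    apply (rule R3_one[OF w True])
     apply (rule H1, assumption+)
    apply (rule H2, assumption+)
    done
  next
    case F: False show ?thesis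
    apply (rule R3_other[OF w False F])
     apply (rule H1, assumption+)
    apply (rule H2, assumption+)
    done
  qed
qed

theorem CC_imp_FC:
  assumes "w \<in> sp n" "CC n w"
  shows "\<forall>u v. reduced_word n w u \<and> reduced_word n w v \<longrightarrow> (u, v) \<in> comm_step\<^sup>*"
  using assms
proof (induction "L n w" arbitrary: w rule: less_induct)
  case less
  show ?case
  proof (intro allI impI)
    fix u v assume uv: "reduced_word n w u \<and> reduced_word n w v"
    have lu: "length u = L n w" "length v = L n w" using uv unfolding rw_iff by auto
    show "(u, v) \<in> comm_step\<^sup>*"
    proof (cases u)
      case Nil then have "v = []" using lu by simp
      then show ?thesis using Nil by simp
    next
      case (Cons a u')
      then obtain b v' where v: "v = b # v'" using lu by (cases v) auto
      have ra: "a < n" "des n a w" "reduced_word n (gen a \<circ> w) u'" using rw_Cons uv Cons by blast+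
      have rb: "b < n" "des n b w" "reduced_word n (gen b \<circ> w) v'" using rw_Cons uv v by blast+
      have sa: "gen a \<circ> w \<in> sp n" using sp_comp[OF gen_sp[OF ra(1)] less.prems(1)] .
      have sb: "gen b \<circ> w \<in> sp n" using sp_comp[OF gen_sp[OF rb(1)] less.prems(1)] .
      have Ca: "CC n (gen a \<circ> w)" using R1[OF less.prems ra(1,2)] .
      have Cb: "CC n (gen b \<circ> w)" using R1[OF less.prems rb(1,2)] .
      have La: "L n (gen a \<circ> w) < L n w" using ra(2) unfolding des_def .
      have Lb: "L n (gen b \<circ> w) < L n w" using rb(2) unfolding des_def .
      show ?thesis
      proof (cases "a = b")
        case True
        have "(u', v') \<in> comm_step\<^sup>*" using less.hyps[OF La sa Ca] ra(3) rb(3) True by blast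
        then show ?thesis using Cons v True comm_Cons by simp
      next
        case False
        have nadj: "a + 1 \<noteq> b" "b + 1 \<noteq> a"
        proof -
          show "a + 1 \<noteq> b"
          proof
            assume "a + 1 = b" then show False using R2[OF less.prems _ ra(2)] rb by auto
          qed
          show "b + 1 \<noteq> a"
          proof
            assume "b + 1 = a" then show False using R2[OF less.prems _ rb(2)] ra by auto
          qed
        qed
        have cm: "gen a \<circ> gen b = gen b \<circ> gen a"
        proof (cases "a < b")
          case True then show ?thesis using gen_comm[of a b] nadj by simp
        next
          case F: False then show ?thesis using gen_comm[of b a] nadj False by simp
        qed
        have dba: "des n b (gen a \<circ> w)" using des_comm[OF less.prems(1) ra(1) rb(1) False nadj rb(2)] .
        have dab: "des n a (gen b \<circ> w)" using des_comm[OF less.prems(1) rb(1) ra(1) _ nadj(2) nadj(1) ra(2)] False by simp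
        have e: "gen b \<circ> (gen a \<circ> w) = gen a \<circ> (gen b \<circ> w)" by (simp only: comp_assoc[symmetric] cm)
        obtain t where t: "reduced_word n (gen b \<circ> (gen a \<circ> w)) t"
          using rw_exists[OF sp_comp[OF gen_sp[OF rb(1)] sa]] by blast
        have t1: "reduced_word n (gen a \<circ> w) (b # t)" using rw_Cons_intro[OF rb(1) dba t sa] .
        have t2: "reduced_word n (gen b \<circ> w) (a # t)" using rw_Cons_intro[OF ra(1) dab _ sb] t e by simp
        have c1: "(u', b # t) \<in> comm_step\<^sup>*" using less.hyps[OF La sa Ca] ra(3) t1 by blast
        have c2: "(v', a # t) \<in> comm_step\<^sup>*" using less.hyps[OF Lb sb Cb] rb(3) t2 by blast
        have "(a # u', a # b # t) \<in> comm_step\<^sup>*" using comm_Cons[OF c1] .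
        moreover have "(a # b # t, b # a # t) \<in> comm_step\<^sup>*" using comm_swap[OF cm] .
        moreover have "(b # a # t, b # v') \<in> comm_step\<^sup>*" using comm_Cons[OF comm_sym[OF c2]] .
        ultimately show ?thesis using Cons v by (meson rtrancl_trans)
      qed
    qed
  qed
qed

definition Bad :: "nat \<Rightarrow> (int \<Rightarrow> int) \<Rightarrow> bool" where
  "Bad n w \<longleftrightarrow> (\<exists>u v a b. reduced_word n w u \<and> reduced_word n w v \<and> gen a \<circ> gen b \<noteq> gen b \<circ> gen a \<and> prj a b u \<noteq> prj a b v)"

lemma prj_Cons: "prj a b (c # u) = (if c = a \<or> c = b then c # prj a b u else prj a b u)"
  unfolding prj_def by simp

theorem notCC_Bad:
  assumes "w \<in> sp n" "\<not> CC n w"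
  shows "Bad n w"
  using assms
proof (induction "L n w" arbitrary: w rule: less_induct)
  case less
  have w: "w \<in> sp n" using less.prems(1) .
  have "\<not> ((\<forall>a. a < n \<longrightarrow> des n a w \<longrightarrow> CC n (gen a \<circ> w)) \<and> (\<forall>a. a + 1 < n \<longrightarrow> des n a w \<longrightarrow> des n (a+1) w \<longrightarrow> False))"
    using R3[OF w] less.prems(2) by blast
  then consider (A) a where "a < n" "des n a w" "\<not> CC n (gen a \<circ> w)"
    | (B) a where "a + 1 < n" "des n a w" "des n (a+1) w" by blast
  then show ?case
  proof cases
    case A
    have sa: "gen a \<circ> w \<in> sp n" using sp_comp[OF gen_sp[OF A(1)] w] .
    have "L n (gen a \<circ> w) < L n w" using A(2) unfolding des_def .
    then have "Bad n (gen a \<circ> w)" using less.hyps sa A(3) by blast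
    then obtain u v b c where h: "reduced_word n (gen a \<circ> w) u" "reduced_word n (gen a \<circ> w) v"
      "gen b \<circ> gen c \<noteq> gen c \<circ> gen b" "prj b c u \<noteq> prj b c v" unfolding Bad_def by blast
    have "reduced_word n w (a # u)" "reduced_word n w (a # v)" using rw_Cons_intro[OF A(1,2) _ w] h by auto
    moreover have "prj b c (a # u) \<noteq> prj b c (a # v)" using h(4) by (simp add: prj_Cons)
    ultimately show ?thesis unfolding Bad_def using h(3) by blast
  next
    case B
    have a1: "a < n" using B by simp
    obtain t1 where t1: "reduced_word n (gen a \<circ> w) t1" using rw_exists[OF sp_comp[OF gen_sp[OF a1] w]] by blast
    obtain t2 where t2: "reduced_word n (gen (a+1) \<circ> w) t2" using rw_exists[OF sp_comp[OF gen_sp[OF B(1)] w]] by blast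
    have "reduced_word n w (a # t1)" using rw_Cons_intro[OF a1 B(2) t1 w] .
    moreover have "reduced_word n w ((a+1) # t2)" using rw_Cons_intro[OF B(1) B(3) t2 w] .
    moreover have "prj a (a+1) (a # t1) \<noteq> prj a (a+1) ((a+1) # t2)" by (simp add: prj_Cons)
    ultimately show ?thesis unfolding Bad_def using gen_noncomm[of a] by blast
  qed
qed

theorem FC_iff: "w \<in> sp n \<Longrightarrow> w \<in> FC_B n \<longleftrightarrow> CC n w"
proof
  assume w: "w \<in> sp n" and f: "w \<in> FC_B n"
  show "CC n w"
  proof (rule ccontr)
    assume "\<not> CC n w"
    then obtain u v a b where h: "reduced_word n w u" "reduced_word n w v" "gen a \<circ> gen b \<noteq> gen b \<circ> gen a" "prj a b u \<noteq> prj a b v"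
      using notCC_Bad[OF w] unfolding Bad_def by blast
    have "(u, v) \<in> comm_step\<^sup>*" using f h unfolding FC_B_def by blast
    then show False using prj_rtrancl[OF _ h(3)] h(4) by blast
  qed
next
  assume w: "w \<in> sp n" and c: "CC n w"
  then show "w \<in> FC_B n" using CC_imp_FC[OF w c] unfolding FC_B_def by blast
qed


lemma FC_B_sp: "w \<in> FC_B n \<Longrightarrow> w \<in> sp n" unfolding FC_B_def by simp

lemma CC_Sn: "\<pi> \<in> Sn n \<Longrightarrow> CC n \<pi> \<longleftrightarrow> avoid321 n (inv \<pi>)"
  using Sn_decomp[of \<pi> n] unfolding CC_def Cp_def by simp

lemma FC_S_char: "FC_S n = {\<pi> \<in> Sn n. avoid321 n (inv \<pi>)}"
proof
  show "FC_S n \<subseteq> {\<pi> \<in> Sn n. avoid321 n (inv \<pi>)}"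
  proof
    fix \<pi> assume h: "\<pi> \<in> FC_S n"
    then have s: "\<pi> \<in> sp n" "\<pi> \<in> FC_B n" unfolding FC_S_def FC_B_def by auto
    have S: "\<pi> \<in> Sn n" using h s unfolding FC_S_def Sn_def by auto
    then show "\<pi> \<in> {\<pi> \<in> Sn n. avoid321 n (inv \<pi>)}" using FC_iff[OF s(1)] s(2) CC_Sn[OF S] by auto
  qed
  show "{\<pi> \<in> Sn n. avoid321 n (inv \<pi>)} \<subseteq> FC_S n"
  proof
    fix \<pi> assume h: "\<pi> \<in> {\<pi> \<in> Sn n. avoid321 n (inv \<pi>)}"
    then have S: "\<pi> \<in> Sn n" "avoid321 n (inv \<pi>)" by auto
    then have "\<pi> \<in> FC_B n" using FC_iff[OF Sn_sp[OF S(1)]] CC_Sn[OF S(1)] by auto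
    then show "\<pi> \<in> FC_S n" using S unfolding FC_S_def Sn_def by auto
  qed
qed

lemma B_pi_char:
  assumes n: "1 \<le> n"
  shows "B_pi n \<pi> = {mu n S | S. S \<subseteq> {1..first_valley n \<pi>} \<and> (1 \<in> Des_inv n \<pi> \<longrightarrow> card S \<le> 1)}"
proof -
  define v where "v = first_valley n \<pi>"
  have vn: "v \<le> n" unfolding v_def by (rule fv_le)
  show ?thesis
  proof (cases "1 \<in> Des_inv n \<pi>")
    case False
    have "B_pi n \<pi> = {foldr (\<lambda>i f. (if i \<in> S then delta i else id) \<circ> f) [1..<v+1] id | S. S \<subseteq> {1..v}}"
      unfolding B_pi_def v_def Let_def using False by simp
    also have "\<dots> = {mu n S | S. S \<subseteq> {1..v}}"
    proof (rule set_eqI, rule iffI)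
      fix x assume "x \<in> {foldr (\<lambda>i f. (if i \<in> S then delta i else id) \<circ> f) [1..<v+1] id | S. S \<subseteq> {1..v}}"
      then obtain S where S: "x = foldr (\<lambda>i f. (if i \<in> S then delta i else id) \<circ> f) [1..<v+1] id" "S \<subseteq> {1..v}" by blast
      then have "x = mu n S" using foldr_prefix[OF S(2) vn] by simp
      then show "x \<in> {mu n S | S. S \<subseteq> {1..v}}" using S(2) by blast
    next
      fix x assume "x \<in> {mu n S | S. S \<subseteq> {1..v}}"
      then obtain S where S: "x = mu n S" "S \<subseteq> {1..v}" by blast
      then have "x = foldr (\<lambda>i f. (if i \<in> S then delta i else id) \<circ> f) [1..<v+1] id" using foldr_prefix[OF S(2) vn] by simp
      then show "x \<in> {foldr (\<lambda>i f. (if i \<in> S then delta i else id) \<circ> f) [1..<v+1] id | S. S \<subseteq> {1..v}}" using S(2) by blast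
    qed
    finally show ?thesis using False unfolding v_def by simp
  next
    case True
    have "B_pi n \<pi> = insert id (delta ` {1..v})" unfolding B_pi_def v_def Let_def using True by simp
    also have "\<dots> = {mu n S | S. S \<subseteq> {1..v} \<and> card S \<le> 1}"
    proof
      show "insert id (delta ` {1..v}) \<subseteq> {mu n S | S. S \<subseteq> {1..v} \<and> card S \<le> 1}"
      proof
        fix x assume "x \<in> insert id (delta ` {1..v})"
        then consider "x = id" | i where "i \<in> {1..v}" "x = delta i" by auto
        then show "x \<in> {mu n S | S. S \<subseteq> {1..v} \<and> card S \<le> 1}"
        proof cases
          case 1 then show ?thesis using mu_empty by (intro CollectI exI[of _ "{}"]) auto
        next
          case 2
          then have "x = mu n {i}" using delta_mu[of i n] vn by auto
          then show ?thesis using 2 by (intro CollectI exI[of _ "{i}"]) auto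
        qed
      qed
      show "{mu n S | S. S \<subseteq> {1..v} \<and> card S \<le> 1} \<subseteq> insert id (delta ` {1..v})"
      proof
        fix x assume "x \<in> {mu n S | S. S \<subseteq> {1..v} \<and> card S \<le> 1}"
        then obtain S where S: "x = mu n S" "S \<subseteq> {1..v}" "card S \<le> 1" by auto
        have fS: "finite S" using finite_subset[OF S(2)] by simp
        show "x \<in> insert id (delta ` {1..v})"
        proof (cases "S = {}")
          case True then show ?thesis using S mu_empty by simp
        next
          case False
          then have "card S = 1" using S(3) fS by (simp add: le_eq_less_or_eq card_gt_0_iff Suc_le_eq)
          then obtain i where i: "S = {i}" using card_1_singletonE by blast
          then have "i \<in> {1..v}" using S by auto
          then have "x = delta i" using delta_mu[of i n] vn S i by auto
          then show ?thesis using \<open>i \<in> {1..v}\<close> by auto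
        qed
      qed
    qed
    finally show ?thesis using True unfolding v_def by simp
  qed
qed

theorem mainTheorem4:
  fixes n :: nat
  assumes "n \<ge> 2"
  shows "FC_B n = (\<Union>\<pi>\<in>FC_S n. (\<lambda>\<mu>. \<mu> \<circ> \<pi>) ` B_pi n \<pi>)
    \<and> (\<forall>\<pi>\<in>FC_S n. \<forall>\<pi>'\<in>FC_S n. \<pi> \<noteq> \<pi>' \<longrightarrow>
          ((\<lambda>\<mu>. \<mu> \<circ> \<pi>) ` B_pi n \<pi>) \<inter> ((\<lambda>\<mu>. \<mu> \<circ> \<pi>') ` B_pi n \<pi>') = {})"
proof -
  have n1: "1 \<le> n" using assms by simp
  have mem: "x \<in> (\<lambda>\<mu>. \<mu> \<circ> \<pi>) ` B_pi n \<pi> \<longleftrightarrow>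
      (\<exists>S. S \<subseteq> {1..first_valley n \<pi>} \<and> (1 \<in> Des_inv n \<pi> \<longrightarrow> card S \<le> 1) \<and> x = mu n S \<circ> \<pi>)" for x \<pi>
    unfolding B_pi_char[OF n1] by blast
  have Ssub: "S \<subseteq> {1..first_valley n \<pi>} \<Longrightarrow> S \<subseteq> {1..n}" for S \<pi>
    using fv_le[of n \<pi>] by auto
  have part1: "FC_B n = (\<Union>\<pi>\<in>FC_S n. (\<lambda>\<mu>. \<mu> \<circ> \<pi>) ` B_pi n \<pi>)"
  proof
    show "FC_B n \<subseteq> (\<Union>\<pi>\<in>FC_S n. (\<lambda>\<mu>. \<mu> \<circ> \<pi>) ` B_pi n \<pi>)"
    proof
      fix w assume wf: "w \<in> FC_B n"
      have w: "w \<in> sp n" using FC_B_sp[OF wf] .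
      have C: "CC n w" using FC_iff[OF w] wf by simp
      define \<pi> where "\<pi> = PI n w"
      have S: "\<pi> \<in> Sn n" unfolding \<pi>_def using decomp(1)[OF w] .
      have Cp: "Cp n (negs n w) \<pi>" using C unfolding CC_def \<pi>_def .
      have "\<pi> \<in> FC_S n" using S Cp unfolding FC_S_char Cp_def by simp
      moreover have "w \<in> (\<lambda>\<mu>. \<mu> \<circ> \<pi>) ` B_pi n \<pi>"
        unfolding mem using Cp decomp(2)[OF w] unfolding Cp_def \<pi>_def by (intro exI[of _ "negs n w"]) auto
      ultimately show "w \<in> (\<Union>\<pi>\<in>FC_S n. (\<lambda>\<mu>. \<mu> \<circ> \<pi>) ` B_pi n \<pi>)" by blast
    qed
    show "(\<Union>\<pi>\<in>FC_S n. (\<lambda>\<mu>. \<mu> \<circ> \<pi>) ` B_pi n \<pi>) \<subseteq> FC_B n"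
    proof
      fix w assume "w \<in> (\<Union>\<pi>\<in>FC_S n. (\<lambda>\<mu>. \<mu> \<circ> \<pi>) ` B_pi n \<pi>)"
      then obtain \<pi> where p: "\<pi> \<in> FC_S n" "w \<in> (\<lambda>\<mu>. \<mu> \<circ> \<pi>) ` B_pi n \<pi>" by blast
      then obtain S where S: "S \<subseteq> {1..first_valley n \<pi>}" "1 \<in> Des_inv n \<pi> \<longrightarrow> card S \<le> 1" "w = mu n S \<circ> \<pi>"
        unfolding mem by blast
      have pS: "\<pi> \<in> Sn n" "avoid321 n (inv \<pi>)" using p(1) unfolding FC_S_char by auto
      have Sn: "S \<subseteq> {1..n}" using Ssub[OF S(1)] .
      have w: "w \<in> sp n" using S(3) sp_comp[OF mu_props(1)[OF Sn] Sn_sp[OF pS(1)]] by simp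
      have "negs n w = S" "PI n w = \<pi>" using decomp_unique[OF Sn pS(1)] S(3) by auto
      then have "CC n w" unfolding CC_def Cp_def using S pS by simp
      then show "w \<in> FC_B n" using FC_iff[OF w] by simp
    qed
  qed
  have part2: "\<forall>\<pi>\<in>FC_S n. \<forall>\<pi>'\<in>FC_S n. \<pi> \<noteq> \<pi>' \<longrightarrow>
          ((\<lambda>\<mu>. \<mu> \<circ> \<pi>) ` B_pi n \<pi>) \<inter> ((\<lambda>\<mu>. \<mu> \<circ> \<pi>') ` B_pi n \<pi>') = {}"
  proof (intro ballI impI)
    fix \<pi> \<pi>' assume h: "\<pi> \<in> FC_S n" "\<pi>' \<in> FC_S n" "\<pi> \<noteq> \<pi>'"
    show "((\<lambda>\<mu>. \<mu> \<circ> \<pi>) ` B_pi n \<pi>) \<inter> ((\<lambda>\<mu>. \<mu> \<circ> \<pi>') ` B_pi n \<pi>') = {}"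
    proof (rule ccontr)
      assume "((\<lambda>\<mu>. \<mu> \<circ> \<pi>) ` B_pi n \<pi>) \<inter> ((\<lambda>\<mu>. \<mu> \<circ> \<pi>') ` B_pi n \<pi>') \<noteq> {}"
      then obtain x where x: "x \<in> (\<lambda>\<mu>. \<mu> \<circ> \<pi>) ` B_pi n \<pi>" "x \<in> (\<lambda>\<mu>. \<mu> \<circ> \<pi>') ` B_pi n \<pi>'" by blast
      obtain S where S: "S \<subseteq> {1..first_valley n \<pi>}" "x = mu n S \<circ> \<pi>" using x(1) unfolding mem by blast
      obtain S' where S': "S' \<subseteq> {1..first_valley n \<pi>'}" "x = mu n S' \<circ> \<pi>'" using x(2) unfolding mem by blast
      have pp: "\<pi> \<in> Sn n" "\<pi>' \<in> Sn n" using h unfolding FC_S_char by auto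
      have "PI n (mu n S \<circ> \<pi>) = \<pi>" using decomp_unique(2)[OF Ssub[OF S(1)] pp(1)] .
      moreover have "PI n (mu n S' \<circ> \<pi>') = \<pi>'" using decomp_unique(2)[OF Ssub[OF S'(1)] pp(2)] .
      ultimately have "PI n x = \<pi>" "PI n x = \<pi>'" using S(2) S'(2) by simp_all
      then show False using h(3) by simp
    qed
  qed
  show ?thesis using part1 part2 by blast
qed

end
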